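(* Under the standing setting and assumptions (A0)–(A3) below, let $\theta:\mathbb N\times(0,\infty)\to\mathbb N$ satisfy $\sum_{n=k}^{\theta(k,b')}\lambda_n\geq b'$ for all $b'>0$, $k\in\mathbb N$; let $\Lambda>\sum_{n=0}^\infty\lambda_n^2$, $c>\int\|\phi^*\|^2_{x^*}\,d\mu$ with $c>0$, and $b>\mathbb E[d^2(x_0,x^* )]$ with $b>0$. Put $C:=4(b+2\Lambda c)+\Lambda c$ and $D:=e^{2\Lambda}(b+C)/(2\underline\alpha)$. Then $\liminf_{n\to\infty}\mathbb E[d^2(x_n,x^* )]=0$, and more precisely for every $\varepsilon>0$ and $N\in\mathbb N$ there is $n\in[N,\theta(N,D/\varepsilon)]$ with $\mathbb E[d^2(x_n,x^* )]<\varepsilon$.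
   Context: Geometry. A Hadamard space is a complete CAT(0) space: a geodesic metric space $(X,d)$ with $d^2(\gamma(tl),x)\leq (1-t)d^2(\gamma(0),x)+td^2(\gamma(l),x)-t(1-t)d^2(\gamma(0),\gamma(l))$ for all $x\in X$, geodesics $\gamma:[0,l]\to X$, $t\in[0,1]$; it is uniquely geodesic, $\gamma_{x,y}$ denoting the geodesic from $x$ to $y$. For $x\in X$, $\angle_x(\gamma,\eta):=\lim_{s,t\to0^+}\bar\angle_x(\gamma(s),\eta(t))$ is the Aleksandrov angle between nonconstant geodesics issuing from $x$; $\Sigma_xX$ is the completion of such geodesics modulo $\angle_x=0$; the tangent space $T_xX$ is the Euclidean cone over $\Sigma_xX$ (elements $t\gamma$, $t\ge0$, all $0\gamma$ identified to $0_x$, $\lambda(t\gamma):=(\lambda t)\gamma$), with metric $d_x(t\gamma,s\eta)=\sqrt{t^2+s^2-2ts\cos\angle_x(\gamma,\eta)}$, $\|t\gamma\|_x=t$, $g_x(t\gamma,s\eta)=ts\cos\angle_x(\gamma,\eta)$; $TX=\bigcup_xT_xX$. $\log_x:X\to T_xX$, $\log_xa:=d(x,a)\gamma_{x,a}$ ($a\ne x$), $\log_xx:=0_x$. Vector fields. $A:X\to2^{TX}$ with $A(x)\subseteq T_xX$ is monotone if $g_x(u,\log_xy)\le-g_y(v,\log_yx)$ for all $u\in A(x),v\in A(y)$, and strongly monotone with modulus $\alpha>0$ if $g_x(u,\log_xy)\le-g_y(v,\log_yx)-\alpha d^2(x,y)$. For monotone $A$ and $\lambda>0$, the resolvent $J_\lambda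 x$ is the unique $z$ with $\tfrac1\lambda\log_zx\in A(z)$ (if it exists); $A$ satisfies the surjectivity condition if such $z$ exists for all $\lambda>0,x\in X$. The Yosida approximate is $A_\lambda x:=\tfrac1\lambda\log_{J_\lambda x}x\in T_{J_\lambda x}X$. Integration. For a probability space and a separable Hadamard space $Y$, $L^p$ consists of measurable $Y$-valued maps with finite $p$-th moment of distance; the integral/expectation of an $L^1$ map is the barycenter of its distribution (minimizer of $z\mapsto\int(d^2(z,w)-d^2(w,y))$), and conditional expectation $\mathbb E[x\mid\mathcal G]$ of $x\in L^2$ is the $\mathcal G$-measurable $L^2$ map minimizing $\int d^2(z,x)$ (extended continuously to $L^1$); this applies to $Y=X$ and $Y=T_xX$. Standing setting. $(E,\mathcal E,\mu)$ and $(\Omega,\mathcal F,\mathbb P)$ are probability spaces; $X$ is a separable Hadamard space with every $T_xX$ separable. $A:E\times X\to2^{TX}$, $A(s,x)\subseteq T_xX$, is a random monotone vector field: each $A(s,\cdot)$ is monotone and $s\mapsto J_\lambda(s,x)$ is $\mathcal E/\mathcal B(X)$-measurable for every $x,\lambda$, where $J_\lambda(s,\cdot)$, $A_\lambda(s,\cdot)$ denote resolvent and Yosida approximate of $A(s,\cdot)$; moreover each $A(s,\cdot)$ satisfies the surjectivity condition. For $x\in X$, $S^p_A(x)$ is the set of measurable $\phi:E\to T_xX$ with $\phi(s)\in A(s,x)$ for all $s$ and $\phi\in L^p(E,T_xX,\mu)$; the mean field is $\underline A(x):=\{\int\phi\,d\mu\mid\phi\in S^1_A(x)\}$; $\mathcal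 Z_A(2):=\{x\mid\exists\phi\in S^2_A(x),\ \int\phi\,d\mu=0_x\}$. Given $x_0\in X$, $(\lambda_n)\subseteq(0,\infty)$ and random variables $\xi_n:\Omega\to E$, the iteration is $x_{n+1}:=J_{\lambda_n}(\xi_{n+1},x_n)$; $\mathcal F_n:=\sigma(\xi_1,\dots,\xi_n)$ ($\mathcal F_0$ trivial), $\mathbb E_n[\cdot]:=\mathbb E[\cdot\mid\mathcal F_n]$. Note $\|A_{\lambda_n}(\xi_{n+1},x_n)\|_{x_{n+1}}=d(x_n,x_{n+1})/\lambda_n$. Assumptions. (A0) $\sum_n\lambda_n^2<\infty$, $\sum_n\lambda_n=\infty$, and $(\xi_{n+1})$ is i.i.d. with distribution $\mu$. (A1) each $A(s,\cdot)$ is strongly monotone with modulus $\alpha(s)\in(0,1]$, where $\alpha:E\to(0,1]$ is measurable with $\underline\alpha:=\int\alpha\,d\mu>0$. (A2) $\underline A$ has a zero $x^*$ (i.e. $0_{x^*}\in\underline A(x^* )$) with $x^*\in\mathcal Z_A(2)$; a fixed $\phi^*\in S^2_A(x^* )$ with $\int\phi^*\,d\mu=0_{x^*}$ is chosen. (A3) $\mathbb E_n[g_{x^*}(\phi^*(\xi_{n+1}),\log_{x^*}x_n)]=0$ a.s. for every $n\in\mathbb N$. *)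

theory Defs
  imports "HOL-Probability.Probability"
begin

definition is_geodesic :: "(real \<Rightarrow> 'a::metric_space) \<Rightarrow> real \<Rightarrow> bool" where
  "is_geodesic \<gamma> l \<longleftrightarrow> l \<ge> 0 \<and>
     (\<forall>s\<in>{0..l}. \<forall>t\<in>{0..l}. dist (\<gamma> s) (\<gamma> t) = \<bar>s - t\<bar>)"

text \<open>The whole type is a Hadamard space: complete (type class), geodesic and CAT(0).\<close>
definition hadamard :: "'a::complete_space itself \<Rightarrow> bool" where
  "hadamard (_::'a itself) \<longleftrightarrow>
     (\<forall>x y::'a. \<exists>\<gamma>. is_geodesic \<gamma> (dist x y) \<and> \<gamma> 0 = x \<and> \<gamma> (dist x y) = y) \<and>
     (\<forall>(\<gamma>::real \<Rightarrow> 'a) l x t. is_geodesic \<gamma> l \<longrightarrow> t \<in> {0..1} \<longrightarrow>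
        (dist (\<gamma> (t * l)) x)\<^sup>2 \<le> (1 - t) * (dist (\<gamma> 0) x)\<^sup>2 + t * (dist (\<gamma> l) x)\<^sup>2
                                   - t * (1 - t) * (dist (\<gamma> 0) (\<gamma> l))\<^sup>2)"

definition separable_type :: "'a::metric_space itself \<Rightarrow> bool" where
  "separable_type (_::'a itself) \<longleftrightarrow> (\<exists>D::'a set. countable D \<and> closure D = UNIV)"

text \<open>The point at distance s from x on the (unique) geodesic from x to y,
  for s in [0, d(x,y)].\<close>
definition gpt :: "'a::metric_space \<Rightarrow> 'a \<Rightarrow> real \<Rightarrow> 'a" where
  "gpt x y s = (THE p. dist x p = s \<and> dist p y = dist x y - s)"

definition cmp_angle :: "'a::metric_space \<Rightarrow> 'a \<Rightarrow> 'a \<Rightarrow> real" where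
  "cmp_angle x p q = arccos (((dist x p)\<^sup>2 + (dist x q)\<^sup>2 - (dist p q)\<^sup>2) / (2 * dist x p * dist x q))"

definition alex_angle :: "'a::metric_space \<Rightarrow> 'a \<Rightarrow> 'a \<Rightarrow> real" where
  "alex_angle x y z = Lim (at_right 0 \<times>\<^sub>F at_right 0) (\<lambda>(s,t). cmp_angle x (gpt x y s) (gpt x z t))"

text \<open>Elements of the space of directions (completion of nonconstant geodesics from x
  modulo zero angle) are represented by angle-Cauchy sequences of endpoints of geodesics
  issuing from x.  A tangent vector is a triple (base point x, length t, direction).
  Equality in the tangent space is the relation tdist = 0.\<close>
type_synonym 'a tv = "'a \<times> real \<times> (nat \<Rightarrow> 'a)"

definition dirseq :: "'a::metric_space \<Rightarrow> (nat \<Rightarrow> 'a) \<Rightarrow> bool" where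
  "dirseq x ys \<longleftrightarrow> (\<forall>k. ys k \<noteq> x) \<and>
     (\<forall>e>0. \<exists>N. \<forall>m\<ge>N. \<forall>n\<ge>N. alex_angle x (ys m) (ys n) < e)"

definition T :: "'a::metric_space \<Rightarrow> 'a tv set" where
  "T x = {(x', t, ys). x' = x \<and> (t = 0 \<or> (t > 0 \<and> dirseq x ys))}"

definition tbase :: "'a tv \<Rightarrow> 'a" where "tbase u = fst u"
definition tnorm :: "'a tv \<Rightarrow> real" where "tnorm u = fst (snd u)"
definition tdir :: "'a tv \<Rightarrow> nat \<Rightarrow> 'a" where "tdir u = snd (snd u)"

definition tangle :: "'a::metric_space tv \<Rightarrow> 'a tv \<Rightarrow> real" where
  "tangle u v = lim (\<lambda>k. alex_angle (tbase u) (tdir u k) (tdir v k))"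

definition tinner :: "'a::metric_space tv \<Rightarrow> 'a tv \<Rightarrow> real" where
  "tinner u v = tnorm u * tnorm v * cos (tangle u v)"

definition tdist :: "'a::metric_space tv \<Rightarrow> 'a tv \<Rightarrow> real" where
  "tdist u v = sqrt ((tnorm u)\<^sup>2 + (tnorm v)\<^sup>2 - 2 * tinner u v)"

definition tzero :: "'a \<Rightarrow> 'a tv" where "tzero x = (x, 0, \<lambda>_. x)"

definition tscale :: "real \<Rightarrow> 'a tv \<Rightarrow> 'a tv" where
  "tscale r u = (tbase u, r * tnorm u, tdir u)"

definition tlog :: "'a::metric_space \<Rightarrow> 'a \<Rightarrow> 'a tv" where
  "tlog x a = (if a = x then tzero x else (x, dist x a, \<lambda>_. a))"

text \<open>Membership in a subset of T x, up to the identification tdist = 0.\<close>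
definition tmem :: "'a::metric_space tv \<Rightarrow> 'a tv set \<Rightarrow> bool" where
  "tmem v S \<longleftrightarrow> (\<exists>u\<in>S. tbase u = tbase v \<and> tdist u v = 0)"

definition tsep :: "'a::metric_space \<Rightarrow> bool" where
  "tsep x \<longleftrightarrow> (\<exists>D. countable D \<and> D \<subseteq> T x \<and> (\<forall>u\<in>T x. \<forall>e>0. \<exists>w\<in>D. tdist u w < e))"

definition vfield :: "('a::metric_space \<Rightarrow> 'a tv set) \<Rightarrow> bool" where
  "vfield A \<longleftrightarrow> (\<forall>x. A x \<subseteq> T x)"

definition monotone_vf :: "('a::metric_space \<Rightarrow> 'a tv set) \<Rightarrow> bool" where
  "monotone_vf A \<longleftrightarrow> vfield A \<and> (\<forall>x y u v. u \<in> A x \<longrightarrow> v \<in> A y \<longrightarrow>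
     tinner u (tlog x y) \<le> - tinner v (tlog y x))"

definition strongly_monotone_vf :: "('a::metric_space \<Rightarrow> 'a tv set) \<Rightarrow> real \<Rightarrow> bool" where
  "strongly_monotone_vf A \<alpha> \<longleftrightarrow> vfield A \<and> \<alpha> > 0 \<and> (\<forall>x y u v. u \<in> A x \<longrightarrow> v \<in> A y \<longrightarrow>
     tinner u (tlog x y) \<le> - tinner v (tlog y x) - \<alpha> * (dist x y)\<^sup>2)"

definition resolvent :: "('a::metric_space \<Rightarrow> 'a tv set) \<Rightarrow> real \<Rightarrow> 'a \<Rightarrow> 'a" where
  "resolvent A l x = (THE z. tmem (tscale (1 / l) (tlog z x)) (A z))"

definition surjectivity_cond :: "('a::metric_space \<Rightarrow> 'a tv set) \<Rightarrow> bool" where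
  "surjectivity_cond A \<longleftrightarrow> (\<forall>l>0. \<forall>x. \<exists>z. tmem (tscale (1 / l) (tlog z x)) (A z))"

text \<open>Borel measurability into the separable space (T x, tdist): preimages of open balls.\<close>
definition tmeasurable :: "'e measure \<Rightarrow> 'a::metric_space \<Rightarrow> ('e \<Rightarrow> 'a tv) \<Rightarrow> bool" where
  "tmeasurable M x \<phi> \<longleftrightarrow> (\<forall>s\<in>space M. \<phi> s \<in> T x) \<and>
     (\<forall>w\<in>T x. \<forall>r. {s\<in>space M. tdist (\<phi> s) w < r} \<in> sets M)"

definition tLp :: "nat \<Rightarrow> 'e measure \<Rightarrow> 'a::metric_space \<Rightarrow> ('e \<Rightarrow> 'a tv) \<Rightarrow> bool" where
  "tLp p M x \<phi> \<longleftrightarrow> tmeasurable M x \<phi> \<and> integrable M (\<lambda>s. (tnorm (\<phi> s)) ^ p)"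

text \<open>z is the barycenter (integral) of the L1 map phi: it minimizes
  z' |-> int (d^2(z', phi) - d^2(phi, 0_x)).\<close>
definition tbary :: "'e measure \<Rightarrow> 'a::metric_space \<Rightarrow> ('e \<Rightarrow> 'a tv) \<Rightarrow> 'a tv \<Rightarrow> bool" where
  "tbary M x \<phi> z \<longleftrightarrow> z \<in> T x \<and> (\<forall>z'\<in>T x.
     (\<integral>s. (tdist z (\<phi> s))\<^sup>2 - (tdist (\<phi> s) (tzero x))\<^sup>2 \<partial>M)
       \<le> (\<integral>s. (tdist z' (\<phi> s))\<^sup>2 - (tdist (\<phi> s) (tzero x))\<^sup>2 \<partial>M))"

definition SA :: "nat \<Rightarrow> 'e measure \<Rightarrow> ('e \<Rightarrow> 'a::metric_space \<Rightarrow> 'a tv set) \<Rightarrow> 'a \<Rightarrow> ('e \<Rightarrow> 'a tv) set" where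
  "SA p M A x = {\<phi>. (\<forall>s\<in>space M. \<phi> s \<in> T x \<and> tmem (\<phi> s) (A s x)) \<and> tLp p M x \<phi>}"

definition zero_of_mean_field :: "'e measure \<Rightarrow> ('e \<Rightarrow> 'a::metric_space \<Rightarrow> 'a tv set) \<Rightarrow> 'a \<Rightarrow> bool" where
  "zero_of_mean_field M A x \<longleftrightarrow> (\<exists>\<phi>\<in>SA 1 M A x. tbary M x \<phi> (tzero x))"

definition ZA2 :: "'e measure \<Rightarrow> ('e \<Rightarrow> 'a::metric_space \<Rightarrow> 'a tv set) \<Rightarrow> 'a set" where
  "ZA2 M A = {x. \<exists>\<phi>\<in>SA 2 M A x. tbary M x \<phi> (tzero x)}"

definition filt :: "'w measure \<Rightarrow> 'e measure \<Rightarrow> (nat \<Rightarrow> 'w \<Rightarrow> 'e) \<Rightarrow> nat \<Rightarrow> 'w measure" where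
  "filt P M \<xi> n = sigma (space P) (\<Union>i\<in>{1..n}. {\<xi> i -` B \<inter> space P | B. B \<in> sets M})"

end

theory Submission
  imports Defs
begin

context
  assumes H: "hadamard TYPE('a::complete_space)"
begin

lemma H_geod: "\<exists>\<gamma>. is_geodesic \<gamma> (dist x y) \<and> \<gamma> 0 = x \<and> \<gamma> (dist x y) = (y::'a)"
  using H unfolding hadamard_def by blast

lemma H_cat: "is_geodesic (\<gamma>::real \<Rightarrow> 'a) l \<Longrightarrow> t \<in> {0..1} \<Longrightarrow>
        (dist (\<gamma> (t * l)) x)\<^sup>2 \<le> (1 - t) * (dist (\<gamma> 0) x)\<^sup>2 + t * (dist (\<gamma> l) x)\<^sup>2
                                   - t * (1 - t) * (dist (\<gamma> 0) (\<gamma> l))\<^sup>2"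
  using H unfolding hadamard_def by blast

lemma geod_pt_unique:
  fixes x y p :: 'a
  assumes g: "is_geodesic \<gamma> (dist x y)" "\<gamma> 0 = x" "\<gamma> (dist x y) = y"
    and s: "0 \<le> s" "s \<le> dist x y"
    and p: "dist x p = s" "dist p y = dist x y - s"
  shows "p = \<gamma> s"
proof (cases "dist x y = 0")
  case True
  then have "s = 0" using s by auto
  then show ?thesis using p g True by auto
next
  case False
  define d where "d = dist x y"
  have dpos: "d > 0" using False d_def by auto
  define t where "t = s / d"
  have t01: "t \<in> {0..1}" using s dpos unfolding t_def d_def by (auto simp: field_simps)
  have td: "t * d = s" using dpos unfolding t_def by auto
  have "(dist (\<gamma> (t * d)) p)\<^sup>2 \<le> (1 - t) * (dist (\<gamma> 0) p)\<^sup>2 + t * (dist (\<gamma> d) p)\<^sup>2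
                                   - t * (1 - t) * (dist (\<gamma> 0) (\<gamma> d))\<^sup>2"
    using H_cat[OF g(1)[folded d_def] t01] by blast
  also have "\<dots> = (1 - t) * s\<^sup>2 + t * (d - s)\<^sup>2 - t * (1 - t) * d\<^sup>2"
    using g p unfolding d_def by (simp add: dist_commute)
  also have "\<dots> = 0" unfolding td[symmetric] by (simp add: algebra_simps power2_eq_square)
  finally have "dist (\<gamma> s) p = 0" using td by simp
  then show ?thesis by simp
qed

lemma gpt_geod:
  fixes x y :: 'a
  assumes g: "is_geodesic \<gamma> (dist x y)" "\<gamma> 0 = x" "\<gamma> (dist x y) = y"
    and s: "0 \<le> s" "s \<le> dist x y"
  shows "gpt x y s = \<gamma> s"
proof -
  have gg: "\<forall>a\<in>{0..dist x y}. \<forall>b\<in>{0..dist x y}. dist (\<gamma> a) (\<gamma> b) = \<bar>a - b\<bar>"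
    using g(1) unfolding is_geodesic_def by blast
  have d1: "dist x (\<gamma> s) = s" using gg[rule_format, of 0 s] g s by auto
  have d2: "dist (\<gamma> s) y = dist x y - s" using gg[rule_format, of s "dist x y"] g s by auto
  show ?thesis unfolding gpt_def
    apply (rule the_equality)
    using d1 d2 apply simp
    using geod_pt_unique[OF g s] by blast
qed

lemma gpt_props:
  fixes x y :: 'a
  assumes s: "0 \<le> s" "s \<le> dist x y"
  shows "dist x (gpt x y s) = s" "dist (gpt x y s) y = dist x y - s"
proof -
  obtain \<gamma> where g: "is_geodesic \<gamma> (dist x y)" "\<gamma> 0 = x" "\<gamma> (dist x y) = y" using H_geod by blast
  have e: "gpt x y s = \<gamma> s" using gpt_geod[OF g s] .
  have gg: "\<forall>a\<in>{0..dist x y}. \<forall>b\<in>{0..dist x y}. dist (\<gamma> a) (\<gamma> b) = \<bar>a - b\<bar>"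
    using g(1) unfolding is_geodesic_def by blast
  show "dist x (gpt x y s) = s" unfolding e using gg[rule_format, of 0 s] g s by auto
  show "dist (gpt x y s) y = dist x y - s" unfolding e using gg[rule_format, of s "dist x y"] g s by auto
qed

lemma gpt_unique:
  fixes x y p :: 'a
  assumes s: "0 \<le> s" "s \<le> dist x y"
    and p: "dist x p = s" "dist p y = dist x y - s"
  shows "gpt x y s = p"
proof -
  obtain \<gamma> where g: "is_geodesic \<gamma> (dist x y)" "\<gamma> 0 = x" "\<gamma> (dist x y) = y" using H_geod by blast
  show ?thesis using gpt_geod[OF g s] geod_pt_unique[OF g s p] by simp
qed

lemma gpt_end: "gpt x y (dist x y) = (y::'a)"
  by (rule gpt_unique) auto

lemma gpt_dist2:
  fixes x y :: 'a
  assumes s: "0 \<le> s" "s \<le> s'" "s' \<le> dist x y"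
  shows "dist (gpt x y s) (gpt x y s') = s' - s"
proof -
  obtain \<gamma> where g: "is_geodesic \<gamma> (dist x y)" "\<gamma> 0 = x" "\<gamma> (dist x y) = y" using H_geod by blast
  have "gpt x y s = \<gamma> s" "gpt x y s' = \<gamma> s'" using gpt_geod[OF g] s by auto
  then show ?thesis using g(1) s unfolding is_geodesic_def by auto
qed

lemma gpt_sub:
  fixes x y :: 'a
  assumes s: "0 \<le> s" "s \<le> s'" "s' \<le> dist x y"
  shows "gpt x (gpt x y s') s = gpt x y s"
proof -
  have a: "dist x (gpt x y s') = s'" using gpt_props s by auto
  show ?thesis
    apply (rule gpt_unique)
    using s a gpt_props[of s x y] gpt_dist2[OF s] by auto
qed

lemma cat0_gpt:
  fixes x y q :: 'a
  assumes t: "0 \<le> t" "t \<le> 1"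
  shows "(dist (gpt x y (t * dist x y)) q)\<^sup>2 \<le> (1 - t) * (dist x q)\<^sup>2 + t * (dist y q)\<^sup>2
                                   - t * (1 - t) * (dist x y)\<^sup>2"
proof -
  obtain \<gamma> where g: "is_geodesic \<gamma> (dist x y)" "\<gamma> 0 = x" "\<gamma> (dist x y) = y" using H_geod by blast
  have "gpt x y (t * dist x y) = \<gamma> (t * dist x y)"
    apply (rule gpt_geod[OF g]) using t by (auto simp: mult_left_le_one_le)
  then show ?thesis using H_cat[OF g(1), of t q] g t by simp
qed

end

definition kap :: "'a::metric_space \<Rightarrow> 'a \<Rightarrow> 'a \<Rightarrow> real" where
  "kap x p q = ((dist x p)\<^sup>2 + (dist x q)\<^sup>2 - (dist p q)\<^sup>2) / (2 * dist x p * dist x q)"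

lemma cmp_kap: "cmp_angle x p q = arccos (kap x p q)"
  unfolding cmp_angle_def kap_def ..

lemma kap_sym: "kap x p q = kap x q p"
  unfolding kap_def by (simp add: dist_commute mult.commute mult.left_commute add.commute)

lemma kap_bounds:
  fixes x p q :: "'a::metric_space"
  assumes "p \<noteq> x" "q \<noteq> x"
  shows "-1 \<le> kap x p q" "kap x p q \<le> 1"
proof -
  define a where "a = dist x p"
  define b where "b = dist x q"
  define c where "c = dist p q"
  have a: "a > 0" "b > 0" using assms unfolding a_def b_def by auto
  have c1: "c \<le> a + b" unfolding a_def b_def c_def by (metis dist_commute dist_triangle)
  have c2: "\<bar>a - b\<bar> \<le> c" unfolding a_def b_def c_def
    by (smt (verit) dist_commute dist_triangle)
  have c0: "c \<ge> 0" unfolding c_def by simp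
  have "c\<^sup>2 \<le> (a+b)\<^sup>2" using c1 c0 by (simp add: power_mono)
  then have "-(2*a*b) \<le> a\<^sup>2 + b\<^sup>2 - c\<^sup>2" by (simp add: power2_eq_square algebra_simps)
  then show "-1 \<le> kap x p q" unfolding kap_def a_def[symmetric] b_def[symmetric] c_def[symmetric]
    using a by (simp add: field_simps)
  have "\<bar>a - b\<bar>\<^sup>2 \<le> c\<^sup>2" using power_mono[OF c2 abs_ge_zero, of 2] by simp
  then have "a\<^sup>2 + b\<^sup>2 - c\<^sup>2 \<le> 2*a*b" by (simp add: power2_eq_square algebra_simps)
  then show "kap x p q \<le> 1" unfolding kap_def a_def[symmetric] b_def[symmetric] c_def[symmetric]
    using a by (simp add: field_simps)
qed

lemma cmp_bounds: "p \<noteq> x \<Longrightarrow> q \<noteq> x \<Longrightarrow> 0 \<le> cmp_angle x p q"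
   "p \<noteq> x \<Longrightarrow> q \<noteq> x \<Longrightarrow> cmp_angle x p q \<le> pi"
  unfolding cmp_kap using kap_bounds[of p x q] by (auto intro!: arccos_lbound arccos_ubound)

definition F :: "'a::metric_space \<Rightarrow> 'a \<Rightarrow> 'a \<Rightarrow> real \<Rightarrow> real \<Rightarrow> real" where
  "F x y z s t = cmp_angle x (gpt x y s) (gpt x z t)"

definition AS :: "'a::metric_space \<Rightarrow> 'a \<Rightarrow> 'a \<Rightarrow> real set" where
  "AS x y z = (\<lambda>(s,t). F x y z s t) ` ({0<..dist x y} \<times> {0<..dist x z})"

context
  assumes H: "hadamard TYPE('a::complete_space)"
begin

lemma kap_mono1:
  fixes x y q :: 'a
  assumes q: "q \<noteq> x" and s: "0 < s" "s \<le> s'" "s' \<le> dist x y"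
  shows "kap x (gpt x y s') q \<le> kap x (gpt x y s) q"
proof -
  define y' where "y' = gpt x y s'"
  have dy': "dist x y' = s'" unfolding y'_def using gpt_props[OF H] s by auto
  have p: "gpt x y s = gpt x y' s" unfolding y'_def using gpt_sub[OF H] s by auto
  define \<tau> where "\<tau> = s / s'"
  have sp: "s' > 0" using s by auto
  have \<tau>: "0 < \<tau>" "\<tau> \<le> 1" using s sp unfolding \<tau>_def by auto
  have st: "s = \<tau> * s'" using sp unfolding \<tau>_def by auto
  define r where "r = dist x q"
  have r: "r > 0" using q unfolding r_def by auto
  have dp: "dist x (gpt x y s) = s" using gpt_props[OF H] s by auto
  have cat0: "(dist (gpt x y' (\<tau> * dist x y')) q)\<^sup>2 \<le> (1 - \<tau>) * (dist x q)\<^sup>2 + \<tau> * (dist y' q)\<^sup>2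
                                   - \<tau> * (1 - \<tau>) * (dist x y')\<^sup>2"
    using cat0_gpt[OF H, of \<tau> x y' q] \<tau> by simp
  have e: "gpt x y' (\<tau> * dist x y') = gpt x y s" using p dy' st by simp
  have cat: "(dist (gpt x y s) q)\<^sup>2 \<le> (1 - \<tau>) * r\<^sup>2 + \<tau> * (dist y' q)\<^sup>2 - \<tau> * (1 - \<tau>) * s'\<^sup>2"
    using cat0 unfolding e unfolding dy' r_def .
  have num: "\<tau> * (s'\<^sup>2 + r\<^sup>2 - (dist y' q)\<^sup>2) \<le> s\<^sup>2 + r\<^sup>2 - (dist (gpt x y s) q)\<^sup>2"
    using cat unfolding st by (simp add: algebra_simps power2_eq_square)
  have "kap x y' q = (s'\<^sup>2 + r\<^sup>2 - (dist y' q)\<^sup>2) / (2 * s' * r)"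
    unfolding kap_def dy' r_def[symmetric] by simp
  also have "\<dots> = (\<tau> * (s'\<^sup>2 + r\<^sup>2 - (dist y' q)\<^sup>2)) / (\<tau> * (2 * s' * r))"
    using \<tau> by simp
  also have "\<dots> = (\<tau> * (s'\<^sup>2 + r\<^sup>2 - (dist y' q)\<^sup>2)) / (2 * s * r)"
    unfolding st by (simp add: ac_simps)
  finally have "kap x y' q = (\<tau> * (s'\<^sup>2 + r\<^sup>2 - (dist y' q)\<^sup>2)) / (2 * s * r)" .
  also have "\<dots> \<le> (s\<^sup>2 + r\<^sup>2 - (dist (gpt x y s) q)\<^sup>2) / (2 * s * r)"
    using num s r by (intro divide_right_mono) auto
  also have "\<dots> = kap x (gpt x y s) q" unfolding kap_def dp r_def ..
  finally show ?thesis unfolding y'_def .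
qed


lemma gpt_ne:
  fixes x y :: 'a
  assumes "0 < s" "s \<le> dist x y" shows "gpt x y s \<noteq> x"
  using gpt_props(1)[OF H, of s x y] assms by auto

lemma F_mono:
  fixes x y z :: 'a
  assumes s: "0 < s" "s \<le> s'" "s' \<le> dist x y" and t: "0 < t" "t \<le> t'" "t' \<le> dist x z"
  shows "F x y z s t \<le> F x y z s' t'"
proof -
  have ne: "gpt x y s \<noteq> x" "gpt x y s' \<noteq> x" "gpt x z t \<noteq> x" "gpt x z t' \<noteq> x"
    using gpt_ne s t by auto
  have k1: "kap x (gpt x y s') (gpt x z t') \<le> kap x (gpt x y s) (gpt x z t')"
    using kap_mono1[OF ne(4) s] .
  have k2: "kap x (gpt x y s) (gpt x z t') \<le> kap x (gpt x y s) (gpt x z t)"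
    using kap_mono1[OF ne(1) t] by (simp add: kap_sym)
  show ?thesis unfolding F_def cmp_kap
    apply (rule arccos_le_arccos)
    using kap_bounds[OF ne(2) ne(4)] kap_bounds[OF ne(1) ne(3)] k1 k2 by auto
qed


lemma AS_ne: fixes x y z :: 'a shows "y \<noteq> x \<Longrightarrow> z \<noteq> x \<Longrightarrow> AS x y z \<noteq> {}"
  unfolding AS_def by auto

lemma AS_bdd: fixes x y z :: 'a shows "bdd_below (AS x y z)"
  unfolding AS_def F_def apply (rule bdd_belowI[of _ 0]) apply clarsimp
  apply (rule cmp_bounds(1)) apply (rule gpt_ne; simp)+ done

lemma alex_inf:
  fixes x y z :: 'a
  assumes y: "y \<noteq> x" and z: "z \<noteq> x"
  shows "alex_angle x y z = Inf (AS x y z)"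
proof -
  define L where "L = Inf (AS x y z)"
  have dy: "dist x y > 0" and dz: "dist x z > 0" using y z by auto
  have lo: "L \<le> F x y z s t" if "0 < s" "s \<le> dist x y" "0 < t" "t \<le> dist x z" for s t
    unfolding L_def apply (rule cInf_lower[OF _ AS_bdd]) unfolding AS_def using that by force
  have lim: "((\<lambda>(s,t). F x y z s t) \<longlongrightarrow> L) (at_right 0 \<times>\<^sub>F at_right 0)"
  proof (rule order_tendstoI)
    fix a assume a: "a < L"
    show "\<forall>\<^sub>F st in at_right 0 \<times>\<^sub>F at_right 0. a < (case st of (s,t) \<Rightarrow> F x y z s t)"
      unfolding eventually_prod_filter
      apply (rule exI[of _ "\<lambda>s. s \<in> {0<..<dist x y}"], rule exI[of _ "\<lambda>s. s \<in> {0<..<dist x z}"])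
      using eventually_at_right_real[OF dy] eventually_at_right_real[OF dz] lo a
      by (auto, smt (verit))
  next
    fix a assume a: "L < a"
    obtain v where v: "v \<in> AS x y z" "v < a"
      using cInf_lessD[OF AS_ne[OF y z]] a unfolding L_def by blast
    then obtain s0 t0 where st0: "s0 \<in> {0<..dist x y}" "t0 \<in> {0<..dist x z}" "v = F x y z s0 t0"
      unfolding AS_def by auto
    show "\<forall>\<^sub>F st in at_right 0 \<times>\<^sub>F at_right 0. (case st of (s,t) \<Rightarrow> F x y z s t) < a"
      unfolding eventually_prod_filter
      apply (rule exI[of _ "\<lambda>s. s \<in> {0<..<s0}"], rule exI[of _ "\<lambda>s. s \<in> {0<..<t0}"])
      apply (intro conjI)
      using st0 apply (intro eventually_at_right_real; simp)
      using st0 apply (intro eventually_at_right_real; simp)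
      using F_mono st0 v by (auto, smt (verit, best) F_mono)
  qed
  have "alex_angle x y z = Lim (at_right 0 \<times>\<^sub>F at_right 0) (\<lambda>(s,t). F x y z s t)"
    unfolding alex_angle_def F_def ..
  also have "\<dots> = L"
    by (rule tendsto_Lim[OF _ lim]) (simp add: prod_filter_eq_bot)
  finally show ?thesis unfolding L_def .
qed

end

context
  assumes H: "hadamard TYPE('a::complete_space)"
begin

lemma alex_le_F:
  fixes x y z :: 'a
  assumes "y \<noteq> x" "z \<noteq> x" "0 < s" "s \<le> dist x y" "0 < t" "t \<le> dist x z"
  shows "alex_angle x y z \<le> F x y z s t"
  unfolding alex_inf[OF H assms(1,2)]
  apply (rule cInf_lower[OF _ AS_bdd[OF H]]) unfolding AS_def using assms by force

lemma alex_nonneg: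
  fixes x y z :: 'a
  assumes "y \<noteq> x" "z \<noteq> x"
  shows "0 \<le> alex_angle x y z"
  unfolding alex_inf[OF H assms(1,2)]
  apply (rule cInf_greatest[OF AS_ne[OF H assms]]) unfolding AS_def F_def
  apply clarsimp apply (rule cmp_bounds(1)) apply (rule gpt_ne[OF H]; simp)+ done

lemma alex_le_cmp:
  fixes x y z :: 'a
  assumes "y \<noteq> x" "z \<noteq> x"
  shows "alex_angle x y z \<le> cmp_angle x y z"
  using alex_le_F[OF assms, of "dist x y" "dist x z"] assms
  unfolding F_def gpt_end[OF H] by simp

lemma alex_le_pi:
  fixes x y z :: 'a
  assumes "y \<noteq> x" "z \<noteq> x"
  shows "alex_angle x y z \<le> pi"
  using alex_le_cmp[OF assms] cmp_bounds(2)[OF assms] by linarith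

lemma alex_sym:
  fixes x y z :: 'a
  assumes "y \<noteq> x" "z \<noteq> x"
  shows "alex_angle x y z = alex_angle x z y"
proof -
  have "AS x y z = AS x z y"
    unfolding AS_def F_def cmp_kap
    by (force simp: kap_sym)
  then show ?thesis using alex_inf[OF H assms] alex_inf[OF H assms(2,1)] by simp
qed

lemma alex_self:
  fixes x y :: 'a
  assumes "y \<noteq> x"
  shows "alex_angle x y y = 0"
proof -
  define s where "s = dist x y"
  have s: "s > 0" using assms s_def by auto
  have d: "dist x (gpt x y s) = s" using gpt_props[OF H, of s x y] s s_def by auto
  have "kap x (gpt x y s) (gpt x y s) = 1" unfolding kap_def d using s
    by (simp add: power2_eq_square)
  then have "F x y y s s = 0" unfolding F_def cmp_kap by simp
  then have "alex_angle x y y \<le> 0" using alex_le_F[OF assms assms s, of s] s_def assms by simp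
  then show ?thesis using alex_nonneg[OF assms assms] by simp
qed

lemma alex_below:
  fixes x y z :: 'a
  assumes y: "y \<noteq> x" and z: "z \<noteq> x" and b: "alex_angle x y z < \<beta>"
  shows "\<exists>e>0. e \<le> dist x y \<and> e \<le> dist x z \<and>
     (\<forall>s t. 0 < s \<longrightarrow> s \<le> e \<longrightarrow> 0 < t \<longrightarrow> t \<le> e \<longrightarrow> F x y z s t < \<beta>)"
proof -
  obtain v where v: "v \<in> AS x y z" "v < \<beta>"
    using cInf_lessD[OF AS_ne[OF H y z]] b unfolding alex_inf[OF H y z] by blast
  then obtain s0 t0 where st0: "s0 \<in> {0<..dist x y}" "t0 \<in> {0<..dist x z}" "v = F x y z s0 t0"
    unfolding AS_def by auto
  show ?thesis
    apply (rule exI[of _ "min s0 t0"])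
    using st0 v F_mono[OF H] by (auto, smt (verit, best) F_mono[OF H])
qed

lemma law_cos:
  fixes x y z :: 'a
  assumes y: "y \<noteq> x" and z: "z \<noteq> x"
  shows "(dist x y)\<^sup>2 + (dist x z)\<^sup>2 - 2 * dist x y * dist x z * cos (alex_angle x y z) \<le> (dist y z)\<^sup>2"
proof -
  have kb: "-1 \<le> kap x y z" "kap x y z \<le> 1" using kap_bounds[OF y z] by auto
  have "cos (cmp_angle x y z) \<le> cos (alex_angle x y z)"
    apply (rule cos_monotone_0_pi_le)
    using alex_nonneg[OF y z] alex_le_cmp[OF y z] cmp_bounds[OF y z] by auto
  then have c: "kap x y z \<le> cos (alex_angle x y z)" unfolding cmp_kap using kb by simp
  have pos: "dist x y > 0" "dist x z > 0" using y z by auto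
  have "(dist x y)\<^sup>2 + (dist x z)\<^sup>2 - (dist y z)\<^sup>2 = 2 * dist x y * dist x z * kap x y z"
    unfolding kap_def using pos by simp
  also have "\<dots> \<le> 2 * dist x y * dist x z * cos (alex_angle x y z)"
    using c pos by (intro mult_left_mono) auto
  finally show ?thesis by linarith
qed

lemma trig_aux:
  fixes s ch sh cr sr :: real
  assumes u1: "ch\<^sup>2 + sh\<^sup>2 = 1" and u2: "cr\<^sup>2 + sr\<^sup>2 = 1" and cr: "cr > 0"
  shows "s\<^sup>2 + (s * ch / cr)\<^sup>2 - 2 * s * (s * ch / cr) * (ch * cr - sh * sr) = (s * (sh * cr + ch * sr) / cr)\<^sup>2"
proof -
  have e0: "cr\<^sup>2 + ch\<^sup>2 - 2 * ch * cr * (ch * cr - sh * sr) = (sh * cr + ch * sr)\<^sup>2"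
    using u1 u2 by algebra
  have "s\<^sup>2 * cr\<^sup>2 + s\<^sup>2 * ch\<^sup>2 - 2 * s\<^sup>2 * ch * cr * (ch * cr - sh * sr) = s\<^sup>2 * (sh * cr + ch * sr)\<^sup>2"
    using arg_cong[OF e0, of "\<lambda>v. s\<^sup>2 * v"] by (simp add: algebra_simps)
  then show ?thesis using cr by (simp add: field_simps power2_eq_square)
qed

lemma alex_triangle:
  fixes x y1 y2 y3 :: 'a
  assumes y: "y1 \<noteq> x" "y2 \<noteq> x" "y3 \<noteq> x"
  shows "alex_angle x y1 y3 \<le> alex_angle x y1 y2 + alex_angle x y2 y3"
proof (rule ccontr)
  define A1 where "A1 = alex_angle x y1 y2"
  define A2 where "A2 = alex_angle x y2 y3"
  define A3 where "A3 = alex_angle x y1 y3"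
  assume "\<not> ?thesis"
  then have lt: "A1 + A2 < A3" unfolding A1_def A2_def A3_def by simp
  define \<delta> where "\<delta> = (A3 - A1 - A2) / 3"
  have \<delta>: "\<delta> > 0" using lt unfolding \<delta>_def by simp
  define \<beta>1 where "\<beta>1 = A1 + \<delta>"
  define \<beta>2 where "\<beta>2 = A2 + \<delta>"
  have A1: "0 \<le> A1" unfolding A1_def using alex_nonneg y by auto
  have A2: "0 \<le> A2" unfolding A2_def using alex_nonneg y by auto
  have A3: "A3 \<le> pi" unfolding A3_def using alex_le_pi y by auto
  have \<delta>3: "3 * \<delta> = A3 - A1 - A2" unfolding \<delta>_def by simp
  have b1: "\<beta>1 > 0" "\<beta>2 > 0" "\<beta>1 + \<beta>2 < A3" using A1 A2 \<delta> \<delta>3 unfolding \<beta>1_def \<beta>2_def by linarith+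
  obtain e1 where e1: "e1 > 0" "e1 \<le> dist x y1" "e1 \<le> dist x y2"
      "\<And>s t. 0 < s \<Longrightarrow> s \<le> e1 \<Longrightarrow> 0 < t \<Longrightarrow> t \<le> e1 \<Longrightarrow> F x y1 y2 s t < \<beta>1"
    using alex_below[OF y(1,2), of \<beta>1] \<delta> unfolding \<beta>1_def A1_def by auto
  obtain e2 where e2: "e2 > 0" "e2 \<le> dist x y2" "e2 \<le> dist x y3"
      "\<And>s t. 0 < s \<Longrightarrow> s \<le> e2 \<Longrightarrow> 0 < t \<Longrightarrow> t \<le> e2 \<Longrightarrow> F x y2 y3 s t < \<beta>2"
    using alex_below[OF y(2,3), of \<beta>2] \<delta> unfolding \<beta>2_def A2_def by auto
  define s where "s = min e1 e2"
  have s: "s > 0" "s \<le> e1" "s \<le> e2" using e1 e2 unfolding s_def by auto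
  define h where "h = (\<beta>1 + \<beta>2) / 2"
  define \<rho> where "\<rho> = (\<beta>1 - \<beta>2) / 2"
  have hb: "\<beta>1 = h + \<rho>" "\<beta>2 = h - \<rho>" unfolding h_def \<rho>_def by (auto simp: field_simps)
  have h: "0 < h" "h < pi / 2" using b1 A3 unfolding h_def by auto
  have \<rho>: "\<bar>\<rho>\<bar> < h" using b1 unfolding h_def \<rho>_def by auto
  have ch: "cos h > 0" using h by (intro cos_gt_zero_pi) auto
  have sh: "sin h > 0" using h by (intro sin_gt_zero) auto
  have crh: "cos h \<le> cos \<rho>"
  proof -
    have "cos h \<le> cos \<bar>\<rho>\<bar>" using \<rho> h by (intro cos_monotone_0_pi_le) auto
    then show ?thesis by simp
  qed
  have cr: "cos \<rho> > 0" using ch crh by linarith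
  define t where "t = s * cos h / cos \<rho>"
  have t: "0 < t" "t \<le> s" using s ch cr crh unfolding t_def by (auto simp: field_simps)
  define p1 where "p1 = gpt x y1 s"
  define p2 where "p2 = gpt x y2 t"
  define p3 where "p3 = gpt x y3 s"
  have dp: "dist x p1 = s" "dist x p2 = t" "dist x p3 = s"
    unfolding p1_def p2_def p3_def using gpt_props(1)[OF H] s t e1 e2 by auto
  have pne: "p1 \<noteq> x" "p2 \<noteq> x" "p3 \<noteq> x" using dp s t by auto
  have key: "(dist p q)\<^sup>2 < a\<^sup>2 + b\<^sup>2 - 2 * a * b * cos \<beta>"
    if "cmp_angle x p q < \<beta>" "0 < \<beta>" "\<beta> < pi" "dist x p = a" "dist x q = b" "p \<noteq> x" "q \<noteq> x"
    for p q :: 'a and a b \<beta>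
  proof -
    have kb: "-1 \<le> kap x p q" "kap x p q \<le> 1" using kap_bounds that by auto
    have "cos \<beta> < kap x p q"
    proof (rule ccontr)
      assume "\<not> ?thesis"
      then have "arccos (cos \<beta>) \<le> arccos (kap x p q)"
        using kb by (intro arccos_le_arccos) auto
      then show False using that arccos_cos[of \<beta>] unfolding cmp_kap by simp
    qed
    moreover have "a > 0" "b > 0" using that by auto
    ultimately have "2 * a * b * cos \<beta> < 2 * a * b * kap x p q" by simp
    also have "2 * a * b * kap x p q = a\<^sup>2 + b\<^sup>2 - (dist p q)\<^sup>2"
      unfolding kap_def that(4,5) using \<open>a > 0\<close> \<open>b > 0\<close> by simp
    finally show ?thesis by simp
  qed
  have bpi: "\<beta>1 < pi" "\<beta>2 < pi" using b1 A3 by auto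
  have d12: "(dist p1 p2)\<^sup>2 < s\<^sup>2 + t\<^sup>2 - 2 * s * t * cos \<beta>1"
    apply (rule key[OF _ b1(1) bpi(1) dp(1,2) pne(1,2)])
    using e1(4)[of s t] s t unfolding F_def p1_def p2_def by auto
  have d23: "(dist p2 p3)\<^sup>2 < s\<^sup>2 + t\<^sup>2 - 2 * s * t * cos \<beta>2"
    using key[OF _ b1(2) bpi(2) dp(2,3) pne(2,3)] e2(4)[of t s] s t unfolding F_def p2_def p3_def
    by (simp add: algebra_simps)
  have u1: "(cos h)\<^sup>2 + (sin h)\<^sup>2 = 1" and u2: "(cos \<rho>)\<^sup>2 + (sin \<rho>)\<^sup>2 = 1" by simp_all
  have i1: "s\<^sup>2 + t\<^sup>2 - 2 * s * t * cos \<beta>1 = (s * sin \<beta>1 / cos \<rho>)\<^sup>2"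
    unfolding hb t_def cos_add sin_add using trig_aux[OF u1 u2 cr, of s] by simp
  have u2': "(cos \<rho>)\<^sup>2 + (- sin \<rho>)\<^sup>2 = 1" by simp
  have i2: "s\<^sup>2 + t\<^sup>2 - 2 * s * t * cos \<beta>2 = (s * sin \<beta>2 / cos \<rho>)\<^sup>2"
    unfolding hb t_def cos_diff sin_diff using trig_aux[OF u1 u2' cr, of s]
    by (simp add: algebra_simps)
  have sb: "sin \<beta>1 \<ge> 0" "sin \<beta>2 \<ge> 0" using b1 bpi by (auto intro: sin_ge_zero)
  have l12: "dist p1 p2 < s * sin \<beta>1 / cos \<rho>"
    apply (rule power_less_imp_less_base[of _ 2]) using d12 i1 s sb cr by auto
  have l23: "dist p2 p3 < s * sin \<beta>2 / cos \<rho>"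
    apply (rule power_less_imp_less_base[of _ 2]) using d23 i2 s sb cr by auto
  have "s * sin \<beta>1 / cos \<rho> + s * sin \<beta>2 / cos \<rho> = 2 * s * sin h"
  proof -
    have e: "sin \<beta>1 + sin \<beta>2 = 2 * sin h * cos \<rho>" unfolding hb sin_add sin_diff by simp
    have "s * sin \<beta>1 + s * sin \<beta>2 = s * (sin \<beta>1 + sin \<beta>2)" by (simp add: distrib_left)
    also have "\<dots> = s * (2 * sin h * cos \<rho>)" by (simp only: e)
    finally have "s * sin \<beta>1 + s * sin \<beta>2 = s * (2 * sin h * cos \<rho>)" .
    then show ?thesis using cr by (simp add: field_simps add_divide_distrib[symmetric])
  qed
  then have d13: "dist p1 p3 < 2 * s * sin h"
    using l12 l23 dist_triangle[of p1 p3 p2] by linarith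
  have "(dist p1 p3)\<^sup>2 < (2 * s * sin h)\<^sup>2"
    using d13 by (intro power_strict_mono) auto
  also have "(2 * s * sin h)\<^sup>2 = 2 * s\<^sup>2 * (1 - cos (2 * h))"
    unfolding cos_double_sin by (simp add: power_mult_distrib)
  finally have lt2: "(dist p1 p3)\<^sup>2 < 2 * s\<^sup>2 * (1 - cos (2 * h))" .
  have s2: "2 * s\<^sup>2 > 0" using s by simp
  have kk: "kap x p1 p3 = 1 - (dist p1 p3)\<^sup>2 / (2 * s\<^sup>2)"
    unfolding kap_def dp using s2 s by (simp add: diff_divide_distrib power2_eq_square)
  have "(dist p1 p3)\<^sup>2 / (2 * s\<^sup>2) < 1 - cos (2 * h)"
    using lt2 s2 by (simp add: pos_divide_less_eq mult.commute)
  then have "cos (2 * h) < kap x p1 p3" unfolding kk by linarith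
  then have "arccos (kap x p1 p3) < arccos (cos (2 * h))"
    using kap_bounds[OF pne(1,3)] by (intro arccos_less_arccos) auto
  also have "arccos (cos (2 * h)) = 2 * h" using h by (intro arccos_cos) auto
  finally have "F x y1 y3 s s < \<beta>1 + \<beta>2" unfolding F_def cmp_kap p1_def[symmetric] p3_def[symmetric] h_def by simp
  moreover have "A3 \<le> F x y1 y3 s s" unfolding A3_def using alex_le_F[OF y(1,3), of s s] s e1 e2 by auto
  ultimately show False using b1 by linarith
qed

end

lemma tinner_tscale: "tinner (tscale r u) w = r * tinner u w"
  unfolding tinner_def tscale_def tangle_def tnorm_def tbase_def tdir_def by simp

lemma tnorm_tlog: "tnorm (tlog z a) = dist z a"
  unfolding tlog_def tnorm_def tzero_def by auto

lemma tbase_tlog: "tbase (tlog z a) = z"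
  unfolding tlog_def tbase_def tzero_def by auto

lemma T_nonneg: "u \<in> T z \<Longrightarrow> tnorm u \<ge> 0"
  unfolding T_def tnorm_def by auto

lemma T_base: "u \<in> T z \<Longrightarrow> tbase u = z"
  unfolding T_def tbase_def by auto

lemma T_dir: "u \<in> T z \<Longrightarrow> tnorm u > 0 \<Longrightarrow> dirseq z (tdir u)"
  unfolding T_def tnorm_def tdir_def by auto

lemma tscale_T: "u \<in> T z \<Longrightarrow> r > 0 \<Longrightarrow> tscale r u \<in> T z"
  unfolding T_def tscale_def tnorm_def tbase_def tdir_def by auto

lemma tinner_bound: "\<bar>tinner u w\<bar> \<le> \<bar>tnorm u\<bar> * \<bar>tnorm w\<bar>"
proof -
  have "\<bar>tinner u w\<bar> = \<bar>tnorm u\<bar> * \<bar>tnorm w\<bar> * \<bar>cos (tangle u w)\<bar>"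
    unfolding tinner_def by (simp add: abs_mult)
  also have "\<dots> \<le> \<bar>tnorm u\<bar> * \<bar>tnorm w\<bar> * 1"
    by (intro mult_left_mono) auto
  finally show ?thesis by simp
qed

lemma tinner_zero2: "tnorm w = 0 \<Longrightarrow> tinner u w = 0"
  unfolding tinner_def by simp

lemma tinner_zero1: "tnorm u = 0 \<Longrightarrow> tinner u w = 0"
  unfolding tinner_def by simp

lemma tinner_tlog_self: "tinner u (tlog z z) = 0"
  by (rule tinner_zero2) (simp add: tnorm_tlog)

lemma polar:
  assumes "tnorm u \<ge> 0" "tnorm w \<ge> 0"
  shows "tinner u w = ((tnorm u)\<^sup>2 + (tnorm w)\<^sup>2 - (tdist u w)\<^sup>2) / 2"
proof -
  define a where "a = tnorm u"
  define b where "b = tnorm w"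
  have "tinner u w \<le> a * b" using tinner_bound[of u w] assms unfolding a_def b_def by simp
  then have "(a - b)\<^sup>2 \<le> a\<^sup>2 + b\<^sup>2 - 2 * tinner u w" by (simp add: power2_eq_square algebra_simps)
  then have nn: "0 \<le> a\<^sup>2 + b\<^sup>2 - 2 * tinner u w" by (smt (verit) zero_le_power2)
  have "(tdist u w)\<^sup>2 = a\<^sup>2 + b\<^sup>2 - 2 * tinner u w"
    unfolding tdist_def a_def[symmetric] b_def[symmetric] using nn by simp
  then show ?thesis unfolding a_def b_def by simp
qed

lemma tdist_zero: "u \<in> T z \<Longrightarrow> tdist u (tzero z) = tnorm u"
  unfolding tdist_def tinner_def tzero_def tnorm_def T_def by auto

lemma sq_aux: "(r*c1 - q*c2)\<^sup>2 + (r*d1 - q*d2)\<^sup>2 = r\<^sup>2*(c1\<^sup>2+d1\<^sup>2) + q\<^sup>2*(c2\<^sup>2+d2\<^sup>2) - 2*r*q*(c1*c2+d1*d2)"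
  for r q c1 c2 d1 d2 :: real
  by (simp add: power2_eq_square algebra_simps)

context
  assumes H: "hadamard TYPE('a::complete_space)"
begin

lemma dirseq_const:
  fixes z y :: 'a
  assumes "y \<noteq> z" shows "dirseq z (\<lambda>_. y)"
  unfolding dirseq_def using alex_self[OF H assms] assms by auto

lemma tlog_T:
  fixes z y :: 'a
  shows "tlog z y \<in> T z"
  unfolding tlog_def T_def tzero_def using dirseq_const by auto

lemma alex_diff:
  fixes z a b c :: 'a
  assumes "a \<noteq> z" "b \<noteq> z" "c \<noteq> z"
  shows "\<bar>alex_angle z a c - alex_angle z b c\<bar> \<le> alex_angle z a b"
  using alex_triangle[OF H assms(1,2,3)] alex_triangle[OF H assms(2,1,3)] alex_sym[OF H assms(1,2)]
  by linarith

lemma dirseq_ne: "dirseq z us \<Longrightarrow> us k \<noteq> z"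
  unfolding dirseq_def by auto

lemma alex_conv:
  fixes z :: 'a
  assumes u: "dirseq z us" and v: "dirseq z vs"
  shows "convergent (\<lambda>k. alex_angle z (us k) (vs k))"
proof -
  have "Cauchy (\<lambda>k. alex_angle z (us k) (vs k))"
  proof (rule metric_CauchyI)
    fix e :: real assume e: "e > 0"
    obtain N1 where N1: "\<forall>m\<ge>N1. \<forall>n\<ge>N1. alex_angle z (us m) (us n) < e/2"
      using u e unfolding dirseq_def by (meson half_gt_zero)
    obtain N2 where N2: "\<forall>m\<ge>N2. \<forall>n\<ge>N2. alex_angle z (vs m) (vs n) < e/2"
      using v e unfolding dirseq_def by (meson half_gt_zero)
    show "\<exists>M. \<forall>m\<ge>M. \<forall>n\<ge>M. dist (alex_angle z (us m) (vs m)) (alex_angle z (us n) (vs n)) < e"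
    proof (intro exI allI impI)
      fix m n assume mn: "max N1 N2 \<le> m" "max N1 N2 \<le> n"
      have ne: "us m \<noteq> z" "us n \<noteq> z" "vs m \<noteq> z" "vs n \<noteq> z" using u v dirseq_ne by metis+
      have 1: "\<bar>alex_angle z (us m) (vs m) - alex_angle z (us n) (vs m)\<bar> \<le> alex_angle z (us m) (us n)"
        using alex_diff[OF ne(1,2,3)] .
      have 2: "\<bar>alex_angle z (vs m) (us n) - alex_angle z (vs n) (us n)\<bar> \<le> alex_angle z (vs m) (vs n)"
        using alex_diff[OF ne(3,4,2)] .
      have s1: "alex_angle z (us n) (vs m) = alex_angle z (vs m) (us n)" using alex_sym[OF H ne(2,3)] .
      have s2: "alex_angle z (us n) (vs n) = alex_angle z (vs n) (us n)" using alex_sym[OF H ne(2,4)] .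
      have "alex_angle z (us m) (us n) < e/2" "alex_angle z (vs m) (vs n) < e/2" using N1 N2 mn by auto
      then show "dist (alex_angle z (us m) (vs m)) (alex_angle z (us n) (vs n)) < e"
        unfolding dist_real_def using 1 2 s1 s2 by linarith
    qed
  qed
  then show ?thesis using Cauchy_convergent_iff by blast
qed

lemma alex_lim:
  fixes z :: 'a
  assumes u: "dirseq z us" and v: "dirseq z vs"
  shows "(\<lambda>k. alex_angle z (us k) (vs k)) \<longlonglongrightarrow> lim (\<lambda>k. alex_angle z (us k) (vs k))"
  using alex_conv[OF assms] convergent_LIMSEQ_iff by blast

lemma alex_lim_bounds:
  fixes z :: 'a
  assumes u: "dirseq z us" and v: "dirseq z vs"
  shows "0 \<le> lim (\<lambda>k. alex_angle z (us k) (vs k))" "lim (\<lambda>k. alex_angle z (us k) (vs k)) \<le> pi"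
proof -
  have ne: "\<And>k. us k \<noteq> z" "\<And>k. vs k \<noteq> z" using u v dirseq_ne by metis+
  show "0 \<le> lim (\<lambda>k. alex_angle z (us k) (vs k))"
    by (rule LIMSEQ_le_const[OF alex_lim[OF assms]]) (use alex_nonneg[OF H] ne in auto)
  show "lim (\<lambda>k. alex_angle z (us k) (vs k)) \<le> pi"
    by (rule LIMSEQ_le_const2[OF alex_lim[OF assms]]) (use alex_le_pi[OF H] ne in auto)
qed

lemma tinner_tlog:
  fixes z y :: 'a
  assumes "u \<in> T z" "tnorm u > 0" "y \<noteq> z"
  shows "tinner u (tlog z y) = tnorm u * dist z y * cos (lim (\<lambda>k. alex_angle z (tdir u k) y))"
  using assms T_base[OF assms(1)] unfolding tinner_def tangle_def tlog_def tnorm_def tdir_def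
  by auto

lemma tinner_tlog_tlog:
  fixes z x y :: 'a
  assumes "x \<noteq> z" "y \<noteq> z"
  shows "tinner (tlog z x) (tlog z y) = dist z x * dist z y * cos (alex_angle z x y)"
proof -
  have "tinner (tlog z x) (tlog z y) = dist z x * dist z y * cos (lim (\<lambda>k. alex_angle z x y))"
    using assms unfolding tlog_def tinner_def tangle_def tnorm_def tbase_def tdir_def by simp
  then show ?thesis by (simp add: limI)
qed

lemma LC:
  fixes z x y :: 'a
  shows "(dist z x)\<^sup>2 + (dist z y)\<^sup>2 - (dist x y)\<^sup>2 \<le> 2 * tinner (tlog z x) (tlog z y)"
proof (cases "x = z \<or> y = z")
  case True
  then show ?thesis
  proof
    assume "x = z" then show ?thesis by (simp add: tlog_def tinner_zero1 tzero_def tnorm_def)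
  next
    assume "y = z" then show ?thesis by (simp add: tinner_tlog_self dist_commute)
  qed
next
  case False
  then show ?thesis using law_cos[OF H, of x z y] tinner_tlog_tlog[of x z y] by simp
qed

lemma G2:
  fixes z y :: 'a
  assumes u: "u \<in> T z" and v: "v \<in> T z" and d: "tdist u v = 0"
  shows "tinner u (tlog z y) = tinner v (tlog z y)"
proof -
  define a where "a = tnorm u"
  define b where "b = tnorm v"
  have ab: "a \<ge> 0" "b \<ge> 0" using T_nonneg[OF u] T_nonneg[OF v] unfolding a_def b_def by auto
  have pol: "tinner u v = (a\<^sup>2 + b\<^sup>2 - (tdist u v)\<^sup>2) / 2"
    unfolding a_def b_def by (rule polar) (use ab[unfolded a_def b_def] in auto)
  have e0: "a\<^sup>2 + b\<^sup>2 - 2 * (a * b * cos (tangle u v)) = 0"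
    using pol d unfolding tinner_def a_def[symmetric] b_def[symmetric] by simp
  have c1: "cos (tangle u v) \<le> 1" by simp
  have "a * b * cos (tangle u v) \<le> a * b" using c1 ab by (simp add: mult_left_le)
  then have "(a - b)\<^sup>2 \<le> 0" using e0 by (simp add: power2_eq_square algebra_simps)
  then have aeb: "a = b" by simp
  show ?thesis
  proof (cases "y = z \<or> a = 0")
    case True
    then show ?thesis
    proof
      assume "y = z" then show ?thesis by (simp add: tinner_tlog_self)
    next
      assume "a = 0" then show ?thesis using aeb unfolding a_def b_def by (simp add: tinner_zero1)
    qed
  next
    case False
    then have y: "y \<noteq> z" and a: "a > 0" using ab by auto
    have cos1: "cos (tangle u v) = 1" using e0 a aeb by (simp add: power2_eq_square algebra_simps)
    define us where "us = tdir u"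
    define vs where "vs = tdir v"
    have du: "dirseq z us" and dv: "dirseq z vs" unfolding us_def vs_def
      using T_dir[OF u] T_dir[OF v] a aeb unfolding a_def b_def by auto
    have tuv: "tangle u v = lim (\<lambda>k. alex_angle z (us k) (vs k))"
      unfolding tangle_def us_def vs_def T_base[OF u] ..
    have L0: "lim (\<lambda>k. alex_angle z (us k) (vs k)) = 0"
    proof (rule ccontr)
      assume ne: "\<not> ?thesis"
      have "lim (\<lambda>k. alex_angle z (us k) (vs k)) > 0" using alex_lim_bounds[OF du dv] ne by auto
      then have "cos (lim (\<lambda>k. alex_angle z (us k) (vs k))) < cos 0"
        using alex_lim_bounds[OF du dv] by (intro cos_monotone_0_pi) auto
      then show False using cos1 tuv by simp
    qed
    have dc: "dirseq z (\<lambda>_. y)" using dirseq_const[OF y] .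
    have lu: "(\<lambda>k. alex_angle z (us k) y) \<longlonglongrightarrow> lim (\<lambda>k. alex_angle z (us k) y)"
      using alex_lim[OF du dc] by simp
    have lv: "(\<lambda>k. alex_angle z (vs k) y) \<longlonglongrightarrow> lim (\<lambda>k. alex_angle z (vs k) y)"
      using alex_lim[OF dv dc] by simp
    have l0: "(\<lambda>k. alex_angle z (us k) (vs k)) \<longlonglongrightarrow> 0"
      using alex_lim[OF du dv] L0 by simp
    have bnd: "\<bar>alex_angle z (us k) y - alex_angle z (vs k) y\<bar> \<le> alex_angle z (us k) (vs k)" for k
      using alex_diff[of "us k" z "vs k" y] du dv y dirseq_ne by metis
    have "(\<lambda>k. \<bar>alex_angle z (us k) y - alex_angle z (vs k) y\<bar>) \<longlonglongrightarrow>
        \<bar>lim (\<lambda>k. alex_angle z (us k) y) - lim (\<lambda>k. alex_angle z (vs k) y)\<bar>"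
      by (intro tendsto_intros lu lv)
    then have "\<bar>lim (\<lambda>k. alex_angle z (us k) y) - lim (\<lambda>k. alex_angle z (vs k) y)\<bar> \<le> 0"
      using l0 bnd by (intro LIMSEQ_le) auto
    then have eq: "lim (\<lambda>k. alex_angle z (us k) y) = lim (\<lambda>k. alex_angle z (vs k) y)" by simp
    have bpos: "tnorm v > 0" using a aeb unfolding b_def by simp
    show ?thesis
      using tinner_tlog[OF u _ y] tinner_tlog[OF v bpos y] a aeb eq
      unfolding a_def b_def us_def vs_def by simp
  qed
qed

lemma G5:
  fixes z a b :: 'a
  assumes phi: "\<phi> \<in> T z"
  shows "tinner \<phi> (tlog z a) - tinner \<phi> (tlog z b) \<le> tnorm \<phi> * dist a b"
proof -
  define p where "p = tnorm \<phi>"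
  have p: "p \<ge> 0" using T_nonneg[OF phi] unfolding p_def .
  have bnd: "\<bar>tinner \<phi> (tlog z c)\<bar> \<le> p * dist z c" for c
    using tinner_bound[of \<phi> "tlog z c"] p unfolding p_def by (simp add: tnorm_tlog)
  show ?thesis
  proof (cases "p = 0 \<or> a = z \<or> b = z")
    case True
    then show ?thesis
    proof (elim disjE)
      assume "p = 0" then show ?thesis unfolding p_def by (simp add: tinner_zero1)
    next
      assume "a = z" then show ?thesis using bnd[of b] by (simp add: tinner_tlog_self p_def)
    next
      assume "b = z" then show ?thesis using bnd[of a] by (simp add: tinner_tlog_self p_def dist_commute)
    qed
  next
    case False
    then have pp: "p > 0" and a: "a \<noteq> z" and b: "b \<noteq> z" using p by auto
    define es where "es = tdir \<phi>"
    have de: "dirseq z es" using T_dir[OF phi] pp unfolding p_def es_def by simp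
    have da: "dirseq z (\<lambda>_. a)" and db: "dirseq z (\<lambda>_. b)" using dirseq_const a b by auto
    define \<theta>a where "\<theta>a = lim (\<lambda>k. alex_angle z (es k) a)"
    define \<theta>b where "\<theta>b = lim (\<lambda>k. alex_angle z (es k) b)"
    have la: "(\<lambda>k. alex_angle z (es k) a) \<longlonglongrightarrow> \<theta>a" unfolding \<theta>a_def using alex_lim[OF de da] by simp
    have lb: "(\<lambda>k. alex_angle z (es k) b) \<longlonglongrightarrow> \<theta>b" unfolding \<theta>b_def using alex_lim[OF de db] by simp
    have ba: "0 \<le> \<theta>a" "\<theta>a \<le> pi" unfolding \<theta>a_def using alex_lim_bounds[OF de da] by auto
    have bb: "0 \<le> \<theta>b" "\<theta>b \<le> pi" unfolding \<theta>b_def using alex_lim_bounds[OF de db] by auto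
    have kb: "\<bar>alex_angle z (es k) a - alex_angle z (es k) b\<bar> \<le> alex_angle z a b" for k
      using alex_diff[of a z b "es k"] alex_sym[OF H, of "es k" z a] alex_sym[OF H, of "es k" z b]
        a b de dirseq_ne by (metis)
    have "(\<lambda>k. \<bar>alex_angle z (es k) a - alex_angle z (es k) b\<bar>) \<longlonglongrightarrow> \<bar>\<theta>a - \<theta>b\<bar>"
      by (intro tendsto_intros la lb)
    then have dth: "\<bar>\<theta>a - \<theta>b\<bar> \<le> alex_angle z a b"
      using kb by (intro LIMSEQ_le_const2) auto
    define ra where "ra = dist z a"
    define rb where "rb = dist z b"
    have r: "ra \<ge> 0" "rb \<ge> 0" unfolding ra_def rb_def by auto
    have "cos (alex_angle z a b) \<le> cos \<bar>\<theta>a - \<theta>b\<bar>"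
      using dth alex_le_pi[OF H a b] by (intro cos_monotone_0_pi_le) auto
    then have cc: "cos (alex_angle z a b) \<le> cos (\<theta>a - \<theta>b)" by simp
    have "(ra * cos \<theta>a - rb * cos \<theta>b)\<^sup>2 \<le> (ra * cos \<theta>a - rb * cos \<theta>b)\<^sup>2 + (ra * sin \<theta>a - rb * sin \<theta>b)\<^sup>2"
      by simp
    also have "\<dots> = ra\<^sup>2 + rb\<^sup>2 - 2 * ra * rb * cos (\<theta>a - \<theta>b)"
    proof -
      have "(ra * cos \<theta>a - rb * cos \<theta>b)\<^sup>2 + (ra * sin \<theta>a - rb * sin \<theta>b)\<^sup>2
          = ra\<^sup>2 * ((cos \<theta>a)\<^sup>2 + (sin \<theta>a)\<^sup>2) + rb\<^sup>2 * ((cos \<theta>b)\<^sup>2 + (sin \<theta>b)\<^sup>2)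
            - 2 * ra * rb * (cos \<theta>a * cos \<theta>b + sin \<theta>a * sin \<theta>b)"
        by (rule sq_aux)
      then show ?thesis unfolding cos_diff by (simp only: sin_cos_squared_add2 mult_1_right)
    qed
    also have "\<dots> \<le> ra\<^sup>2 + rb\<^sup>2 - 2 * ra * rb * cos (alex_angle z a b)"
    proof -
      have "ra * rb * cos (alex_angle z a b) \<le> ra * rb * cos (\<theta>a - \<theta>b)"
        using cc r by (intro mult_left_mono) auto
      then show ?thesis by linarith
    qed
    also have "\<dots> \<le> (dist a b)\<^sup>2" using law_cos[OF H, of a z b] a b unfolding ra_def rb_def by simp
    finally have sq: "(ra * cos \<theta>a - rb * cos \<theta>b)\<^sup>2 \<le> (dist a b)\<^sup>2" .
    have "ra * cos \<theta>a - rb * cos \<theta>b \<le> dist a b"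
      using power2_le_imp_le[OF sq] by simp
    then have "p * (ra * cos \<theta>a - rb * cos \<theta>b) \<le> p * dist a b" using p by (intro mult_left_mono)
    moreover have "tinner \<phi> (tlog z a) = p * ra * cos \<theta>a"
      using tinner_tlog[OF phi _ a] pp unfolding p_def ra_def \<theta>a_def es_def by simp
    moreover have "tinner \<phi> (tlog z b) = p * rb * cos \<theta>b"
      using tinner_tlog[OF phi _ b] pp unfolding p_def rb_def \<theta>b_def es_def by simp
    ultimately have "tinner \<phi> (tlog z a) - tinner \<phi> (tlog z b) \<le> p * dist a b"
      by (simp add: right_diff_distrib mult.assoc)
    then show ?thesis unfolding p_def .
  qed
qed

end

lemma shift_real:
  fixes l D0 D1 \<delta> :: real
  assumes l: "l > 0" and nn: "D1 \<ge> 0" "\<delta> \<ge> 0" "D0 \<ge> 0" and tri: "D0 \<le> D1 + \<delta>"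
  shows "2 * l * D0\<^sup>2 \<le> 2 * l * D1\<^sup>2 + \<delta>\<^sup>2 / 2 + 8 * l\<^sup>2 * D0\<^sup>2"
proof (cases "4 * l \<ge> 1")
  case True
  have "2 * l * D0\<^sup>2 * (1 - 4 * l) \<le> 0"
    using True l by (intro mult_nonneg_nonpos) auto
  moreover have "2 * l * D0\<^sup>2 - 8 * l\<^sup>2 * D0\<^sup>2 = 2 * l * D0\<^sup>2 * (1 - 4 * l)"
    by (simp add: power2_eq_square algebra_simps)
  moreover have "0 \<le> 2 * l * D1\<^sup>2 + \<delta>\<^sup>2 / 2" using l by simp
  ultimately show ?thesis by linarith
next
  case False
  have i: "D0\<^sup>2 \<le> (D1 + \<delta>)\<^sup>2" using tri nn by (intro power_mono) auto
  have ii: "0 \<le> (4 * l * D1 - \<delta>)\<^sup>2" by simp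
  have iii: "4 * l * (D1 + \<delta>)\<^sup>2 \<le> (1 + 4 * l) * (4 * l * D1\<^sup>2 + \<delta>\<^sup>2)"
    using ii l nn by (simp add: power2_eq_square algebra_simps)
  have "4 * l * D0\<^sup>2 \<le> (1 + 4 * l) * (4 * l * D1\<^sup>2 + \<delta>\<^sup>2)"
    using i iii l by (smt (verit) mult_left_mono)
  then have "(1 - 4 * l) * (4 * l * D0\<^sup>2) \<le> (1 - 4 * l) * ((1 + 4 * l) * (4 * l * D1\<^sup>2 + \<delta>\<^sup>2))"
    using False by (intro mult_left_mono) auto
  also have "\<dots> = (1 - 16 * l\<^sup>2) * (4 * l * D1\<^sup>2 + \<delta>\<^sup>2)" by (simp add: power2_eq_square algebra_simps)
  also have "\<dots> \<le> 4 * l * D1\<^sup>2 + \<delta>\<^sup>2"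
  proof -
    have "0 \<le> 16 * l\<^sup>2 * (4 * l * D1\<^sup>2 + \<delta>\<^sup>2)" using l by simp
    then show ?thesis by (simp add: algebra_simps)
  qed
  finally show ?thesis by (simp add: power2_eq_square algebra_simps)
qed

lemma step_real:
  fixes l a D0 D1 \<delta> I g g' p :: real
  assumes l: "l > 0" and a: "0 < a" "a \<le> 1" and nn: "D1 \<ge> 0" "\<delta> \<ge> 0" "D0 \<ge> 0" "p \<ge> 0"
    and tri: "D0 \<le> D1 + \<delta>"
    and sm: "(1 / l) * I \<le> - g' - a * D1\<^sup>2"
    and lc: "\<delta>\<^sup>2 + D1\<^sup>2 - D0\<^sup>2 \<le> 2 * I"
    and g5: "g - g' \<le> p * \<delta>"
  shows "D1\<^sup>2 + 2 * l * a * D0\<^sup>2 \<le> (1 + 8 * l\<^sup>2) * D0\<^sup>2 - 2 * l * g + 2 * l\<^sup>2 * p\<^sup>2"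
    and "D1\<^sup>2 \<le> D0\<^sup>2 - 2 * l * g + 2 * l\<^sup>2 * p\<^sup>2"
proof -
  have I: "I \<le> l * (- g' - a * D1\<^sup>2)" using sm l by (simp add: field_simps)
  have E1: "\<delta>\<^sup>2 + D1\<^sup>2 - D0\<^sup>2 \<le> 2 * l * (- g + p * \<delta> - a * D1\<^sup>2)"
  proof -
    have "l * (- g' - a * D1\<^sup>2) \<le> l * (- g + p * \<delta> - a * D1\<^sup>2)" using g5 l by (intro mult_left_mono) auto
    then show ?thesis using lc I by linarith
  qed
  have q: "2 * l * p * \<delta> \<le> \<delta>\<^sup>2 / 2 + 2 * l\<^sup>2 * p\<^sup>2"
  proof -
    have "0 \<le> (\<delta> - 2 * l * p)\<^sup>2" by simp
    then show ?thesis by (simp add: power2_eq_square algebra_simps)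
  qed
  have E2: "D1\<^sup>2 + 2 * l * a * D1\<^sup>2 + \<delta>\<^sup>2 / 2 \<le> D0\<^sup>2 - 2 * l * g + 2 * l\<^sup>2 * p\<^sup>2"
    using E1 q by (simp add: algebra_simps)
  have sh: "2 * l * D0\<^sup>2 \<le> 2 * l * D1\<^sup>2 + \<delta>\<^sup>2 / 2 + 8 * l\<^sup>2 * D0\<^sup>2"
    using shift_real[OF l nn(1,2,3) tri] .
  have "a * (2 * l * D0\<^sup>2) \<le> a * (2 * l * D1\<^sup>2 + \<delta>\<^sup>2 / 2 + 8 * l\<^sup>2 * D0\<^sup>2)"
    using sh a by (intro mult_left_mono) auto
  moreover have "a * (\<delta>\<^sup>2 / 2) \<le> \<delta>\<^sup>2 / 2" using a by (simp add: mult_left_le_one_le)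
  moreover have "a * (8 * l\<^sup>2 * D0\<^sup>2) \<le> 8 * l\<^sup>2 * D0\<^sup>2" using a by (simp add: mult_left_le_one_le)
  ultimately have "2 * l * a * D0\<^sup>2 \<le> 2 * l * a * D1\<^sup>2 + \<delta>\<^sup>2 / 2 + 8 * l\<^sup>2 * D0\<^sup>2"
    by (simp add: algebra_simps)
  then show "D1\<^sup>2 + 2 * l * a * D0\<^sup>2 \<le> (1 + 8 * l\<^sup>2) * D0\<^sup>2 - 2 * l * g + 2 * l\<^sup>2 * p\<^sup>2"
    using E2 by (simp add: algebra_simps)
  have "0 \<le> 2 * l * a * D1\<^sup>2" using l a by simp
  then show "D1\<^sup>2 \<le> D0\<^sup>2 - 2 * l * g + 2 * l\<^sup>2 * p\<^sup>2" using E2 zero_le_power2[of \<delta>] by linarith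
qed

lemma cont_real:
  fixes D r e \<epsilon> :: real
  assumes "D \<ge> 0" "r \<ge> 0" "0 \<le> e" "e < 1" "e < \<epsilon> / 2" "e < \<epsilon>\<^sup>2 / (4 * (r + 1))"
    and "D\<^sup>2 \<le> e * (2 * r + 2 * e + D)"
  shows "D < \<epsilon>"
proof (rule ccontr)
  assume "\<not> D < \<epsilon>"
  then have De: "\<epsilon> \<le> D" by simp
  have ep: "\<epsilon> > 0" using assms by linarith
  have "e * D \<le> (\<epsilon> / 2) * D" using assms by (intro mult_right_mono) auto
  also have "\<dots> \<le> D\<^sup>2 / 2" using De ep assms(1) by (simp add: power2_eq_square mult_right_mono)
  finally have 1: "e * D \<le> D\<^sup>2 / 2" .
  have 2: "e * (2 * r + 2 * e) \<le> e * (2 * r + 2)" using assms by (intro mult_left_mono) auto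
  have "D\<^sup>2 \<le> e * (2 * r + 2) + D\<^sup>2 / 2" using assms(7) 1 2 by (simp add: algebra_simps)
  then have 3: "D\<^sup>2 \<le> 4 * e * (r + 1)" by (simp add: algebra_simps)
  have "4 * e * (r + 1) < \<epsilon>\<^sup>2" using assms(6) assms(2) by (simp add: field_simps)
  moreover have "\<epsilon>\<^sup>2 \<le> D\<^sup>2" using De ep by (intro power_mono) auto
  ultimately show False using 3 by linarith
qed

context
  assumes H: "hadamard TYPE('a::complete_space)"
begin

lemma tmem_get:
  fixes A :: "'a \<Rightarrow> 'a tv set" and z :: 'a
  assumes vf: "vfield A" and w: "w \<in> T z" and tm: "tmem w (A z)"
  shows "\<exists>v\<in>A z. \<forall>y. tinner v (tlog z y) = tinner w (tlog z y)"
proof -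
  obtain v where v: "v \<in> A z" "tdist v w = 0" using tm unfolding tmem_def by auto
  have vT: "v \<in> T z" using vf v unfolding vfield_def by auto
  show ?thesis using v G2[OF H vT w v(2)] by auto
qed

lemma tmem_get_res:
  fixes A :: "'a \<Rightarrow> 'a tv set" and z x :: 'a
  assumes vf: "vfield A" and l: "l > 0" and tm: "tmem (tscale (1 / l) (tlog z x)) (A z)"
  shows "\<exists>u\<in>A z. \<forall>y. tinner u (tlog z y) = (1 / l) * tinner (tlog z x) (tlog z y)"
proof -
  have wT: "tscale (1 / l) (tlog z x) \<in> T z" using tscale_T[OF tlog_T[OF H], of "1/l" z x] l by auto
  show ?thesis using tmem_get[OF vf wT tm] by (simp add: tinner_tscale)
qed

lemma res_pair:
  fixes A :: "'a \<Rightarrow> 'a tv set" and z1 z2 x1 x2 :: 'a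
  assumes mono: "monotone_vf A" and l: "l > 0"
    and t1: "tmem (tscale (1 / l) (tlog z1 x1)) (A z1)"
    and t2: "tmem (tscale (1 / l) (tlog z2 x2)) (A z2)"
  shows "(dist z1 x1)\<^sup>2 + (dist z2 x2)\<^sup>2 + 2 * (dist z1 z2)\<^sup>2 \<le> (dist x1 z2)\<^sup>2 + (dist x2 z1)\<^sup>2"
proof -
  have vf: "vfield A" using mono unfolding monotone_vf_def by auto
  obtain u1 where u1: "u1 \<in> A z1" "\<And>y. tinner u1 (tlog z1 y) = (1 / l) * tinner (tlog z1 x1) (tlog z1 y)"
    using tmem_get_res[OF vf l t1] by blast
  obtain u2 where u2: "u2 \<in> A z2" "\<And>y. tinner u2 (tlog z2 y) = (1 / l) * tinner (tlog z2 x2) (tlog z2 y)"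
    using tmem_get_res[OF vf l t2] by blast
  have "tinner u1 (tlog z1 z2) \<le> - tinner u2 (tlog z2 z1)"
    using mono u1(1) u2(1) unfolding monotone_vf_def by blast
  then have "(1 / l) * (tinner (tlog z1 x1) (tlog z1 z2) + tinner (tlog z2 x2) (tlog z2 z1)) \<le> 0"
    unfolding u1(2) u2(2) by (simp add: algebra_simps)
  then have s: "tinner (tlog z1 x1) (tlog z1 z2) + tinner (tlog z2 x2) (tlog z2 z1) \<le> 0"
    using l by (simp add: divide_le_0_iff)
  have 1: "(dist z1 x1)\<^sup>2 + (dist z1 z2)\<^sup>2 - (dist x1 z2)\<^sup>2 \<le> 2 * tinner (tlog z1 x1) (tlog z1 z2)"
    using LC[OF H] .
  have 2: "(dist z2 x2)\<^sup>2 + (dist z2 z1)\<^sup>2 - (dist x2 z1)\<^sup>2 \<le> 2 * tinner (tlog z2 x2) (tlog z2 z1)"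
    using LC[OF H] .
  show ?thesis using 1 2 s by (simp add: dist_commute)
qed

lemma res_unique:
  fixes A :: "'a \<Rightarrow> 'a tv set" and z1 z2 x :: 'a
  assumes mono: "monotone_vf A" and l: "l > 0"
    and t1: "tmem (tscale (1 / l) (tlog z1 x)) (A z1)"
    and t2: "tmem (tscale (1 / l) (tlog z2 x)) (A z2)"
  shows "z1 = z2"
  using res_pair[OF mono l t1 t2] by (simp add: dist_commute)

lemma res_char:
  fixes A :: "'a \<Rightarrow> 'a tv set" and x :: 'a
  assumes mono: "monotone_vf A" and surj: "surjectivity_cond A" and l: "l > 0"
  shows "tmem (tscale (1 / l) (tlog (resolvent A l x) x)) (A (resolvent A l x))"
proof -
  obtain z where z: "tmem (tscale (1 / l) (tlog z x)) (A z)" using surj l unfolding surjectivity_cond_def by blast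
  show ?thesis unfolding resolvent_def
    by (rule theI[of _ z]) (use z res_unique[OF mono l] in blast)+
qed

lemma res_est:
  fixes A :: "'a \<Rightarrow> 'a tv set" and x1 x2 :: 'a
  assumes mono: "monotone_vf A" and surj: "surjectivity_cond A" and l: "l > 0"
  shows "(dist (resolvent A l x1) (resolvent A l x2))\<^sup>2 \<le>
     dist x1 x2 * (dist x1 (resolvent A l x1) + dist x2 (resolvent A l x2) + dist x1 x2)"
proof -
  define z1 where "z1 = resolvent A l x1"
  define z2 where "z2 = resolvent A l x2"
  have p: "(dist z1 x1)\<^sup>2 + (dist z2 x2)\<^sup>2 + 2 * (dist z1 z2)\<^sup>2 \<le> (dist x1 z2)\<^sup>2 + (dist x2 z1)\<^sup>2"
    unfolding z1_def z2_def by (rule res_pair[OF mono l res_char[OF mono surj l] res_char[OF mono surj l]])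
  define e where "e = dist x1 x2"
  define r1 where "r1 = dist z1 x1"
  define r2 where "r2 = dist z2 x2"
  have a: "(dist x1 z2)\<^sup>2 \<le> (e + r2)\<^sup>2"
    apply (rule power_mono) unfolding e_def r2_def using dist_triangle[of x1 z2 x2] by (auto simp: dist_commute)
  have b: "(dist x2 z1)\<^sup>2 \<le> (e + r1)\<^sup>2"
    apply (rule power_mono) unfolding e_def r1_def using dist_triangle[of x2 z1 x1] by (auto simp: dist_commute)
  have "2 * (dist z1 z2)\<^sup>2 \<le> (e + r2)\<^sup>2 - r2\<^sup>2 + (e + r1)\<^sup>2 - r1\<^sup>2"
    using p a b unfolding r1_def r2_def by linarith
  also have "\<dots> = 2 * (e * (r1 + r2 + e))" by (simp add: power2_eq_square algebra_simps)
  finally show ?thesis unfolding z1_def[symmetric] z2_def[symmetric] e_def r1_def r2_def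
    by (simp add: dist_commute)
qed

lemma res_cont:
  fixes A :: "'a \<Rightarrow> 'a tv set" and y :: 'a
  assumes mono: "monotone_vf A" and surj: "surjectivity_cond A" and l: "l > 0"
  shows "isCont (resolvent A l) y"
  unfolding continuous_at_eps_delta
proof (intro allI impI)
  fix \<epsilon> :: real assume ep: "\<epsilon> > 0"
  define r where "r = dist y (resolvent A l y)"
  have r: "r \<ge> 0" unfolding r_def by simp
  define d where "d = min 1 (min (\<epsilon> / 2) (\<epsilon>\<^sup>2 / (4 * (r + 1))))"
  have d: "d > 0" unfolding d_def using ep r by auto
  show "\<exists>d>0. \<forall>x'. dist x' y < d \<longrightarrow> dist (resolvent A l x') (resolvent A l y) < \<epsilon>"
  proof (intro exI conjI allI impI)
    show "d > 0" by (rule d)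
    fix y' assume y': "dist y' y < d"
    define D where "D = dist (resolvent A l y') (resolvent A l y)"
    define e where "e = dist y y'"
    have est: "D\<^sup>2 \<le> e * (r + dist y' (resolvent A l y') + e)"
      using res_est[OF mono surj l, of y y'] unfolding D_def e_def r_def by (simp add: dist_commute)
    have r2: "dist y' (resolvent A l y') \<le> e + r + D"
      unfolding e_def r_def D_def
      using dist_triangle[of y' "resolvent A l y'" y] dist_triangle[of y "resolvent A l y'" "resolvent A l y"]
      by (simp add: dist_commute)
    have e0: "e \<ge> 0" unfolding e_def by simp
    have "D\<^sup>2 \<le> e * (2 * r + 2 * e + D)"
    proof -
      have "e * (r + dist y' (resolvent A l y') + e) \<le> e * (2 * r + 2 * e + D)"
        using r2 e0 by (intro mult_left_mono) auto
      then show ?thesis using est by linarith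
    qed
    moreover have "e < 1" "e < \<epsilon> / 2" "e < \<epsilon>\<^sup>2 / (4 * (r + 1))"
      using y' unfolding d_def e_def by (auto simp: dist_commute)
    ultimately show "dist (resolvent A l y') (resolvent A l y) < \<epsilon>"
      using cont_real[of D r e \<epsilon>] r e0 unfolding D_def by simp
  qed
qed

lemma step:
  fixes A :: "'a \<Rightarrow> 'a tv set" and x xs :: 'a
  assumes sm: "strongly_monotone_vf A a" and a1: "a \<le> 1" and mono: "monotone_vf A"
    and surj: "surjectivity_cond A" and l: "l > 0"
    and phi: "\<phi> \<in> T xs" "tmem \<phi> (A xs)"
  shows "(dist (resolvent A l x) xs)\<^sup>2 + 2 * l * a * (dist x xs)\<^sup>2 \<le>
           (1 + 8 * l\<^sup>2) * (dist x xs)\<^sup>2 - 2 * l * tinner \<phi> (tlog xs x) + 2 * l\<^sup>2 * (tnorm \<phi>)\<^sup>2"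
    and "(dist (resolvent A l x) xs)\<^sup>2 \<le> (dist x xs)\<^sup>2 - 2 * l * tinner \<phi> (tlog xs x) + 2 * l\<^sup>2 * (tnorm \<phi>)\<^sup>2"
proof -
  define z where "z = resolvent A l x"
  have vf: "vfield A" using mono unfolding monotone_vf_def by auto
  have a0: "a > 0" using sm unfolding strongly_monotone_vf_def by auto
  obtain u where u: "u \<in> A z" "\<And>y. tinner u (tlog z y) = (1 / l) * tinner (tlog z x) (tlog z y)"
    using tmem_get_res[OF vf l res_char[OF mono surj l]] unfolding z_def by blast
  obtain v where v: "v \<in> A xs" "\<And>y. tinner v (tlog xs y) = tinner \<phi> (tlog xs y)"
    using tmem_get[OF vf phi] by blast
  have "tinner u (tlog z xs) \<le> - tinner v (tlog xs z) - a * (dist z xs)\<^sup>2"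
    using sm u(1) v(1) unfolding strongly_monotone_vf_def by blast
  then have smi: "(1 / l) * tinner (tlog z x) (tlog z xs) \<le> - tinner \<phi> (tlog xs z) - a * (dist z xs)\<^sup>2"
    unfolding u(2) v(2) .
  have lc: "(dist x z)\<^sup>2 + (dist z xs)\<^sup>2 - (dist x xs)\<^sup>2 \<le> 2 * tinner (tlog z x) (tlog z xs)"
    using LC[OF H, of z x xs] by (simp add: dist_commute)
  have g5: "tinner \<phi> (tlog xs x) - tinner \<phi> (tlog xs z) \<le> tnorm \<phi> * dist x z"
    using G5[OF H phi(1)] .
  have tri: "dist x xs \<le> dist z xs + dist x z" using dist_triangle[of x xs z] by (simp add: dist_commute)
  have pn: "tnorm \<phi> \<ge> 0" using T_nonneg[OF phi(1)] .
  note sr = step_real[OF l a0 a1 zero_le_dist zero_le_dist zero_le_dist pn tri smi lc g5]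
  show "(dist (resolvent A l x) xs)\<^sup>2 + 2 * l * a * (dist x xs)\<^sup>2 \<le>
           (1 + 8 * l\<^sup>2) * (dist x xs)\<^sup>2 - 2 * l * tinner \<phi> (tlog xs x) + 2 * l\<^sup>2 * (tnorm \<phi>)\<^sup>2"
    using sr(1) unfolding z_def .
  show "(dist (resolvent A l x) xs)\<^sup>2 \<le> (dist x xs)\<^sup>2 - 2 * l * tinner \<phi> (tlog xs x) + 2 * l\<^sup>2 * (tnorm \<phi>)\<^sup>2"
    using sr(2) unfolding z_def .
qed

end

lemma carath:
  fixes F :: "'e \<Rightarrow> 'a::metric_space \<Rightarrow> 'b::metric_space"
  assumes D: "countable D" "closure D = (UNIV::'a set)"
    and Fm: "\<And>y. (\<lambda>s. F s y) \<in> borel_measurable M"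
    and Fc: "\<And>s y. s \<in> space M \<Longrightarrow> isCont (F s) y"
    and S: "S \<in> measurable N M" and Y: "Y \<in> borel_measurable N"
  shows "(\<lambda>\<omega>. F (S \<omega>) (Y \<omega>)) \<in> borel_measurable N"
proof -
  have Dne: "D \<noteq> {}" using D(2) by auto
  define e where "e = from_nat_into D"
  have eD: "range e = D" unfolding e_def using range_from_nat_into[OF Dne D(1)] .
  have ex: "\<exists>i. dist (e i) y < r" if "r > 0" for y r
  proof -
    have "y \<in> closure D" using D(2) by auto
    then have "\<exists>d\<in>D. dist d y < r" using closure_approachable[of y D] that by blast
    then obtain d where "d \<in> D" "dist d y < r" by blast
    then show ?thesis using eD by (metis rangeE)
  qed
  define idx where "idx k \<omega> = (LEAST i. dist (e i) (Y \<omega>) < 1 / Suc k)" for k \<omega>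
  have idx_prop: "dist (e (idx k \<omega>)) (Y \<omega>) < 1 / Suc k" for k \<omega>
    unfolding idx_def by (rule LeastI_ex) (rule ex, simp)
  have idx_meas: "idx k \<in> measurable N (count_space UNIV)" for k
  proof -
    have dm: "(\<lambda>w. dist (e i) (Y w)) \<in> borel_measurable N" for i
      using measurable_compose[OF Y borel_measurable_continuous_onI[of "\<lambda>y. dist (e i) y"]]
      by (simp add: continuous_on_dist continuous_on_const continuous_on_id)
    note dm[measurable]
    show ?thesis unfolding idx_def[abs_def] by measurable
  qed
  have G_meas: "(\<lambda>\<omega>. F (S \<omega>) (e (idx k \<omega>))) \<in> borel_measurable N" for k
  proof (rule measurable_compose_countable'[where f = "\<lambda>i \<omega>. F (S \<omega>) (e i)" and I = UNIV])
    show "\<And>i. i \<in> UNIV \<Longrightarrow> (\<lambda>\<omega>. F (S \<omega>) (e i)) \<in> borel_measurable N"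
      using measurable_compose[OF S Fm] by simp
  qed (use idx_meas in auto)
  show ?thesis
  proof (rule borel_measurable_LIMSEQ_metric[OF G_meas])
    fix \<omega> assume \<omega>: "\<omega> \<in> space N"
    have "(\<lambda>k. e (idx k \<omega>)) \<longlonglongrightarrow> Y \<omega>"
    proof (rule tendsto_sandwich[THEN tendsto_dist_iff[THEN iffD2], rotated 2])
      show "\<forall>\<^sub>F k in sequentially. 0 \<le> dist (e (idx k \<omega>)) (Y \<omega>)" by simp
      show "\<forall>\<^sub>F k in sequentially. dist (e (idx k \<omega>)) (Y \<omega>) \<le> 1 / Suc k"
        using idx_prop less_imp_le by (intro always_eventually allI) blast
      show "(\<lambda>k. 1 / real (Suc k)) \<longlonglongrightarrow> 0" using LIMSEQ_inverse_real_of_nat by (simp add: inverse_eq_divide)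
    qed simp
    moreover have "S \<omega> \<in> space M" using measurable_space[OF S \<omega>] .
    ultimately show "(\<lambda>k. F (S \<omega>) (e (idx k \<omega>))) \<longlonglongrightarrow> F (S \<omega>) (Y \<omega>)"
      using Fc isCont_tendsto_compose by blast
  qed
qed

lemma filt_space: "space (filt P M \<xi> n) = space P"
  unfolding filt_def by (simp add: space_measure_of_conv)

lemma filt_sets:
  "sets (filt P M \<xi> n) = sigma_sets (space P) (\<Union>i\<in>{1..n}. {\<xi> i -` B \<inter> space P | B. B \<in> sets M})"
  unfolding filt_def by (rule sets_measure_of) auto

lemma filt_sub:
  assumes "\<forall>i. \<xi> i \<in> P \<rightarrow>\<^sub>M M"
  shows "subalgebra P (filt P M \<xi> n)"
  unfolding subalgebra_def filt_space filt_sets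
  using assms by (auto intro!: sets.sigma_sets_subset measurable_sets[OF assms[rule_format]])

lemma filt_mono:
  assumes "n \<le> m"
  shows "sets (filt P M \<xi> n) \<subseteq> sets (filt P M \<xi> m)"
  unfolding filt_sets apply (rule sigma_sets_mono') using assms by fastforce

lemma filt_meas_mono:
  assumes "n \<le> m" "f \<in> measurable (filt P M \<xi> n) L"
  shows "f \<in> measurable (filt P M \<xi> m) L"
  using assms filt_mono[OF assms(1), of P M \<xi>] unfolding measurable_def filt_space by blast

lemma filt_xi:
  assumes "\<forall>i. \<xi> i \<in> P \<rightarrow>\<^sub>M M" "1 \<le> i" "i \<le> n"
  shows "\<xi> i \<in> filt P M \<xi> n \<rightarrow>\<^sub>M M"
proof (rule measurableI)
  fix \<omega> assume "\<omega> \<in> space (filt P M \<xi> n)"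
  then show "\<xi> i \<omega> \<in> space M" using measurable_space[OF assms(1)[rule_format]] unfolding filt_space by blast
next
  fix B assume "B \<in> sets M"
  then show "\<xi> i -` B \<inter> space (filt P M \<xi> n) \<in> sets (filt P M \<xi> n)"
    unfolding filt_space filt_sets using assms by (intro sigma_sets.Basic) (auto intro!: bexI[of _ i])
qed

lemma indep_filt:
  fixes P :: "'w measure" and M :: "'e measure" and \<xi> :: "nat \<Rightarrow> 'w \<Rightarrow> 'e"
    and X :: "'w \<Rightarrow> real" and f :: "'e \<Rightarrow> real"
  assumes probP: "prob_space P"
    and xi_meas: "\<forall>i. \<xi> i \<in> P \<rightarrow>\<^sub>M M"
    and indep: "prob_space.indep_vars P (\<lambda>_. M) (\<lambda>n. \<xi> (Suc n)) UNIV"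
    and X: "X \<in> borel_measurable (filt P M \<xi> n)"
    and f: "f \<in> borel_measurable M"
  shows "prob_space.indep_var P borel X borel (\<lambda>\<omega>. f (\<xi> (Suc n) \<omega>))"
proof -
  interpret prob_space P by (rule probP)
  define E where "E i = {\<xi> (Suc i) -` A \<inter> space P | A. A \<in> sets M}" for i
  have iE: "indep_sets E UNIV" using indep unfolding indep_vars_def2 E_def by auto
  define K where "K b = (if b then {..<n} else {n})" for b
  have ic: "indep_sets (\<lambda>j. sigma_sets (space P) (\<Union>i\<in>K j. E i)) UNIV"
  proof (rule indep_sets_collect_sigma)
    show "indep_sets E (\<Union>j\<in>UNIV. K j)" using indep_sets_mono_index[OF _ iE] by auto
    show "Int_stable (E i)" for i
      unfolding E_def Int_stable_def
      apply auto
      apply (rule_tac x="A \<inter> Aa" in exI)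
      apply auto
      done
    show "disjoint_family_on K UNIV" unfolding disjoint_family_on_def K_def by auto
  qed
  have XP: "X \<in> borel_measurable P" using measurable_from_subalg[OF filt_sub[OF xi_meas] X] .
  have fP: "(\<lambda>\<omega>. f (\<xi> (Suc n) \<omega>)) \<in> borel_measurable P"
    using measurable_compose[OF xi_meas[rule_format] f] .
  have unions: "(\<Union>i\<in>K True. E i) = (\<Union>i\<in>{1..n}. {\<xi> i -` B \<inter> space P | B. B \<in> sets M})"
  proof
    show "(\<Union>i\<in>K True. E i) \<subseteq> (\<Union>i\<in>{1..n}. {\<xi> i -` B \<inter> space P | B. B \<in> sets M})"
    proof
      fix S assume "S \<in> (\<Union>i\<in>K True. E i)"
      then obtain i A where iA: "i < n" "A \<in> sets M" "S = \<xi> (Suc i) -` A \<inter> space P"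
        unfolding K_def E_def by auto
      then show "S \<in> (\<Union>i\<in>{1..n}. {\<xi> i -` B \<inter> space P | B. B \<in> sets M})"
        by (auto intro!: bexI[of _ "Suc i"])
    qed
    show "(\<Union>i\<in>{1..n}. {\<xi> i -` B \<inter> space P | B. B \<in> sets M}) \<subseteq> (\<Union>i\<in>K True. E i)"
    proof
      fix S assume "S \<in> (\<Union>i\<in>{1..n}. {\<xi> i -` B \<inter> space P | B. B \<in> sets M})"
      then obtain i B where iB: "i \<in> {1..n}" "B \<in> sets M" "S = \<xi> i -` B \<inter> space P" by auto
      then have "i = Suc (i - 1)" "i - 1 < n" by auto
      then show "S \<in> (\<Union>i\<in>K True. E i)" unfolding K_def E_def using iB
        by (auto intro!: bexI[of _ "i - 1"])
    qed
  qed
  have T: "sigma_sets (space P) {X -` A \<inter> space P | A. A \<in> sets borel} \<subseteq> sigma_sets (space P) (\<Union>i\<in>K True. E i)"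
  proof -
    have "sigma_sets (space P) (\<Union>i\<in>K True. E i) = sets (filt P M \<xi> n)"
      unfolding unions filt_sets ..
    moreover have "sigma_sets (space P) {X -` A \<inter> space P | A. A \<in> sets borel} \<subseteq> sets (filt P M \<xi> n)"
      using sets.sigma_sets_subset[of "{X -` A \<inter> space P | A. A \<in> sets borel}" "filt P M \<xi> n"]
        measurable_sets[OF X] unfolding filt_space by blast
    ultimately show ?thesis by simp
  qed
  have F: "sigma_sets (space P) {(\<lambda>\<omega>. f (\<xi> (Suc n) \<omega>)) -` A \<inter> space P | A. A \<in> sets borel}
      \<subseteq> sigma_sets (space P) (\<Union>i\<in>K False. E i)"
  proof (rule sigma_sets_mono')
    show "{(\<lambda>\<omega>. f (\<xi> (Suc n) \<omega>)) -` A \<inter> space P | A. A \<in> sets borel} \<subseteq> (\<Union>i\<in>K False. E i)"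
    proof
      fix S assume "S \<in> {(\<lambda>\<omega>. f (\<xi> (Suc n) \<omega>)) -` A \<inter> space P | A. A \<in> sets borel}"
      then obtain A where A: "A \<in> sets borel" "S = (\<lambda>\<omega>. f (\<xi> (Suc n) \<omega>)) -` A \<inter> space P" by auto
      have "S = \<xi> (Suc n) -` (f -` A \<inter> space M) \<inter> space P"
        using A measurable_space[OF xi_meas[rule_format, of "Suc n"]] by auto
      moreover have "f -` A \<inter> space M \<in> sets M" using measurable_sets[OF f A(1)] .
      ultimately have "S \<in> E n" unfolding E_def by blast
      then show "S \<in> (\<Union>i\<in>K False. E i)" unfolding K_def by auto
    qed
  qed
  show ?thesis
    unfolding indep_var_eq
  proof (intro conjI)
    show "random_variable borel X" using XP by simp
    show "random_variable borel (\<lambda>\<omega>. f (\<xi> (Suc n) \<omega>))" using fP by simp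
    show "indep_set (sigma_sets (space P) {X -` A \<inter> space P | A. A \<in> sets borel})
        (sigma_sets (space P) {(\<lambda>\<omega>. f (\<xi> (Suc n) \<omega>)) -` A \<inter> space P | A. A \<in> sets borel})"
      unfolding indep_set_def
      by (rule indep_sets_mono_sets[OF ic]) (use T F in \<open>auto split: bool.split\<close>)
  qed
qed

lemma final_real:
  fixes a lam :: "nat \<Rightarrow> real" and \<theta> :: "nat \<Rightarrow> real \<Rightarrow> nat"
  assumes lam: "\<forall>n. lam n > 0" and \<theta>: "\<forall>b'>0. \<forall>k. (\<Sum>n=k..\<theta> k b'. lam n) \<ge> b'"
    and bound: "\<And>N M. (\<Sum>n=N..M. lam n * a n) < D" and D: "D > 0" and ep: "\<epsilon> > 0"
  shows "\<exists>n\<in>{N..\<theta> N (D / \<epsilon>)}. a n < \<epsilon>"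
proof (rule ccontr)
  assume "\<not> ?thesis"
  then have ge: "\<And>n. n \<in> {N..\<theta> N (D / \<epsilon>)} \<Longrightarrow> \<epsilon> \<le> a n" by force
  have "D = \<epsilon> * (D / \<epsilon>)" using ep by simp
  also have "\<dots> \<le> \<epsilon> * (\<Sum>n=N..\<theta> N (D / \<epsilon>). lam n)"
    using \<theta> D ep by (intro mult_left_mono) auto
  also have "\<dots> = (\<Sum>n=N..\<theta> N (D / \<epsilon>). lam n * \<epsilon>)" by (simp add: sum_distrib_left mult.commute)
  also have "\<dots> \<le> (\<Sum>n=N..\<theta> N (D / \<epsilon>). lam n * a n)"
    using ge lam by (intro sum_mono mult_left_mono) (auto simp: less_imp_le)
  finally show False using bound[of N "\<theta> N (D / \<epsilon>)"] by linarith
qed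

lemma bound_a:
  fixes a lam :: "nat \<Rightarrow> real"
  assumes R0: "\<And>n. a (Suc n) \<le> a n + 2 * (lam n)\<^sup>2 * c0"
  shows "a n \<le> a 0 + 2 * c0 * (\<Sum>i<n. (lam i)\<^sup>2)"
proof (induction n)
  case 0 then show ?case by simp
next
  case (Suc n)
  then show ?case using R0[of n] by (simp add: algebra_simps)
qed

lemma rec_sum:
  fixes a lam :: "nat \<Rightarrow> real"
  assumes R1: "\<And>n. a (Suc n) + 2 * lam n * ab * a n \<le> (1 + 8 * (lam n)\<^sup>2) * a n + 2 * (lam n)\<^sup>2 * c0"
    and B: "\<And>n. a n \<le> B"
  shows "2 * ab * (\<Sum>n<m. lam n * a n) + a m \<le> a 0 + (8 * B + 2 * c0) * (\<Sum>n<m. (lam n)\<^sup>2)"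
proof (induction m)
  case 0 then show ?case by simp
next
  case (Suc m)
  have "8 * (lam m)\<^sup>2 * a m \<le> 8 * (lam m)\<^sup>2 * B" using B[of m] by (intro mult_left_mono) auto
  then have "a (Suc m) + 2 * lam m * ab * a m \<le> a m + (lam m)\<^sup>2 * (8 * B + 2 * c0)"
    using R1[of m] by (simp add: algebra_simps)
  then show ?case using Suc by (simp add: algebra_simps)
qed

lemma const_ineq:
  fixes d0 c0 S b c \<Lambda> :: real
  assumes "0 \<le> d0" "d0 < b" "0 \<le> c0" "c0 < c" "0 \<le> S" "S < \<Lambda>"
  shows "d0 + (8 * (d0 + 2 * c0 * S) + 2 * c0) * S < exp (2 * \<Lambda>) * (b + (4 * (b + 2 * \<Lambda> * c) + \<Lambda> * c))"
proof -
  have L: "\<Lambda> > 0" using assms by linarith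
  have 1: "d0 * (1 + 8 * S) < b * (1 + 8 * \<Lambda>)"
  proof -
    have "d0 * (1 + 8 * S) < b * (1 + 8 * S)" using assms by (intro mult_strict_right_mono) auto
    also have "\<dots> \<le> b * (1 + 8 * \<Lambda>)" using assms by (intro mult_left_mono) auto
    finally show ?thesis .
  qed
  have 2: "c0 * S\<^sup>2 \<le> c * \<Lambda>\<^sup>2" using assms by (intro mult_mono power_mono) auto
  have 3: "c0 * S \<le> c * \<Lambda>" using assms by (intro mult_mono) auto
  have "d0 + (8 * (d0 + 2 * c0 * S) + 2 * c0) * S = d0 * (1 + 8 * S) + 16 * (c0 * S\<^sup>2) + 2 * (c0 * S)"
    by (simp add: power2_eq_square algebra_simps)
  also have "\<dots> < b * (1 + 8 * \<Lambda>) + 16 * (c * \<Lambda>\<^sup>2) + 2 * (c * \<Lambda>)" using 1 2 3 by linarith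
  also have "\<dots> \<le> (1 + 2 * \<Lambda>) * (b + (4 * (b + 2 * \<Lambda> * c) + \<Lambda> * c))"
  proof -
    have "0 \<le> 4 * b + 2 * \<Lambda> * b + 7 * \<Lambda> * c + 2 * (\<Lambda>\<^sup>2 * c)"
      using assms L by (intro add_nonneg_nonneg mult_nonneg_nonneg) auto
    then show ?thesis by (simp add: power2_eq_square algebra_simps)
  qed
  also have "\<dots> \<le> exp (2 * \<Lambda>) * (b + (4 * (b + 2 * \<Lambda> * c) + \<Lambda> * c))"
    using assms L exp_ge_add_one_self[of "2 * \<Lambda>"] by (intro mult_right_mono) auto
  finally show ?thesis .
qed

lemma dist2_meas:
  fixes f :: "'w \<Rightarrow> 'a::metric_space"
  assumes "f \<in> borel_measurable N"
  shows "(\<lambda>\<omega>. (dist (f \<omega>) c)\<^sup>2) \<in> borel_measurable N"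
  using measurable_compose[OF assms borel_measurable_continuous_onI[of "\<lambda>y. (dist y c)\<^sup>2"]]
  by (simp add: continuous_on_dist continuous_on_const continuous_on_id continuous_on_power)

theorem mainTheorem8:
  fixes P :: "'w measure" and M :: "'e measure"
    and A :: "'e \<Rightarrow> 'a::complete_space \<Rightarrow> 'a tv set"
    and \<alpha> :: "'e \<Rightarrow> real"
    and lam :: "nat \<Rightarrow> real" and \<xi> :: "nat \<Rightarrow> 'w \<Rightarrow> 'e"
    and x0 xs :: 'a and x :: "nat \<Rightarrow> 'w \<Rightarrow> 'a"
    and \<phi>s :: "'e \<Rightarrow> 'a tv"
    and \<theta> :: "nat \<Rightarrow> real \<Rightarrow> nat" and \<Lambda> c b :: real
  assumes hadamard: "hadamard TYPE('a)"
    and sep: "separable_type TYPE('a)"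
    and sepT: "\<forall>y::'a. tsep y"
    and probE: "prob_space M" and probP: "prob_space P"
    and mono: "\<forall>s\<in>space M. monotone_vf (A s)"
    and surj: "\<forall>s\<in>space M. surjectivity_cond (A s)"
    and meas: "\<forall>l>0. \<forall>y. (\<lambda>s. resolvent (A s) l y) \<in> M \<rightarrow>\<^sub>M borel"
    and lam_pos: "\<forall>n. lam n > 0"
    and iter0: "\<forall>\<omega>\<in>space P. x 0 \<omega> = x0"
    and iterS: "\<forall>n. \<forall>\<omega>\<in>space P. x (Suc n) \<omega> = resolvent (A (\<xi> (Suc n) \<omega>)) (lam n) (x n \<omega>)"
    \<comment> \<open>(A0)\<close>
    and sq_sum: "summable (\<lambda>n. (lam n)\<^sup>2)"
    and not_sum: "\<not> summable lam"
    and xi_meas: "\<forall>n. \<xi> n \<in> P \<rightarrow>\<^sub>M M"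
    and indep: "prob_space.indep_vars P (\<lambda>_. M) (\<lambda>n. \<xi> (Suc n)) UNIV"
    and distr: "\<forall>n. distr P M (\<xi> (Suc n)) = M"
    \<comment> \<open>(A1)\<close>
    and \<alpha>_meas: "\<alpha> \<in> borel_measurable M"
    and \<alpha>_range: "\<forall>s\<in>space M. 0 < \<alpha> s \<and> \<alpha> s \<le> 1"
    and \<alpha>_int: "(\<integral>s. \<alpha> s \<partial>M) > 0"
    and strong: "\<forall>s\<in>space M. strongly_monotone_vf (A s) (\<alpha> s)"
    \<comment> \<open>(A2)\<close>
    and zero: "zero_of_mean_field M A xs"
    and xsZ: "xs \<in> ZA2 M A"
    and \<phi>s_S2: "\<phi>s \<in> SA 2 M A xs"
    and \<phi>s_int: "tbary M xs \<phi>s (tzero xs)"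
    \<comment> \<open>(A3)\<close>
    and A3: "\<forall>n. AE \<omega> in P. real_cond_exp P (filt P M \<xi> n)
               (\<lambda>\<omega>. tinner (\<phi>s (\<xi> (Suc n) \<omega>)) (tlog xs (x n \<omega>))) \<omega> = 0"
    \<comment> \<open>parameters\<close>
    and \<theta>: "\<forall>b'>0. \<forall>k. (\<Sum>n=k..\<theta> k b'. lam n) \<ge> b'"
    and \<Lambda>: "\<Lambda> > (\<Sum>n. (lam n)\<^sup>2)"
    and c: "c > (\<integral>s. (tnorm (\<phi>s s))\<^sup>2 \<partial>M)" "c > 0"
    and b: "b > (dist x0 xs)\<^sup>2" "b > 0"
  defines "C \<equiv> 4 * (b + 2 * \<Lambda> * c) + \<Lambda> * c"
    and "D \<equiv> exp (2 * \<Lambda>) * (b + (4 * (b + 2 * \<Lambda> * c) + \<Lambda> * c)) / (2 * (\<integral>s. \<alpha> s \<partial>M))"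
  shows "liminf (\<lambda>n. \<integral>\<^sup>+ \<omega>. ennreal ((dist (x n \<omega>) xs)\<^sup>2) \<partial>P) = 0 \<and>
         (\<forall>\<epsilon>>0. \<forall>N. \<exists>n\<in>{N..\<theta> N (D / \<epsilon>)}.
             (\<integral>\<^sup>+ \<omega>. ennreal ((dist (x n \<omega>) xs)\<^sup>2) \<partial>P) < ennreal \<epsilon>)"
proof -
  interpret P: prob_space P by (rule probP)
  interpret ME: prob_space M by (rule probE)
  obtain Dd :: "'a set" where Dd: "countable Dd" "closure Dd = UNIV"
    using sep unfolding separable_type_def by blast
  have xiM: "\<xi> i \<omega> \<in> space M" if "\<omega> \<in> space P" for i \<omega>
    using measurable_space[OF xi_meas[rule_format, of i] that] .
  have phiT: "\<phi>s s \<in> T xs" "tmem (\<phi>s s) (A s xs)" if "s \<in> space M" for s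
    using \<phi>s_S2 that unfolding SA_def by auto
  have tLp2: "tLp 2 M xs \<phi>s" using \<phi>s_S2 unfolding SA_def by auto
  define pp where "pp s = (tnorm (\<phi>s s))\<^sup>2" for s
  have pp_int: "integrable M pp" using tLp2 unfolding tLp_def pp_def by auto
  have pp_meas: "pp \<in> borel_measurable M" using pp_int by auto
  have pp_nn: "pp s \<ge> 0" for s unfolding pp_def by simp
  define c0 where "c0 = (\<integral>s. pp s \<partial>M)"
  have c0: "0 \<le> c0" "c0 < c" unfolding c0_def using c(1) pp_nn unfolding pp_def by auto
  define ab where "ab = (\<integral>s. \<alpha> s \<partial>M)"
  have ab: "ab > 0" unfolding ab_def using \<alpha>_int .
  have al_int: "integrable M \<alpha>" using \<alpha>_int not_integrable_integral_eq by force
  have sm_s: "strongly_monotone_vf (A s) (\<alpha> s)" if "s \<in> space M" for s using strong that by auto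
  define G where "G s y = tinner (\<phi>s s) (tlog xs y)" for s y
  have tzT: "tzero xs \<in> T xs" unfolding tzero_def T_def by simp
  have G_meas: "(\<lambda>s. G s y) \<in> borel_measurable M" for y
  proof -
    have wT: "tlog xs y \<in> T xs" using tlog_T[OF hadamard] .
    have td: "(\<lambda>s. tdist (\<phi>s s) (tlog xs y)) \<in> borel_measurable M"
      using tLp2 wT unfolding tLp_def tmeasurable_def borel_measurable_iff_less by blast
    have tn: "(\<lambda>s. tdist (\<phi>s s) (tzero xs)) \<in> borel_measurable M"
      using tLp2 tzT unfolding tLp_def tmeasurable_def borel_measurable_iff_less by blast
    have eq: "G s y = ((tdist (\<phi>s s) (tzero xs))\<^sup>2 + (dist xs y)\<^sup>2 - (tdist (\<phi>s s) (tlog xs y))\<^sup>2) / 2"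
      if "s \<in> space M" for s
      using polar[of "\<phi>s s" "tlog xs y"] T_nonneg[OF phiT(1)[OF that]] tdist_zero[OF phiT(1)[OF that]]
      unfolding G_def tnorm_tlog by simp
    show ?thesis
      by (rule measurable_cong[THEN iffD2, OF eq]) (use td tn in \<open>auto intro!: borel_measurable_divide borel_measurable_add borel_measurable_diff borel_measurable_power\<close>)
  qed
  have G_lip: "\<bar>G s y - G s y'\<bar> \<le> tnorm (\<phi>s s) * dist y y'" if "s \<in> space M" for s y y'
    using G5[OF hadamard phiT(1)[OF that], of y y'] G5[OF hadamard phiT(1)[OF that], of y' y]
    unfolding G_def by (simp add: dist_commute abs_le_iff)
  have G_cont: "isCont (G s) y" if "s \<in> space M" for s y
    unfolding continuous_at_eps_delta
  proof (intro allI impI)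
    fix e :: real assume e: "e > 0"
    define q where "q = tnorm (\<phi>s s) + 1"
    have q: "q > 0" "tnorm (\<phi>s s) \<le> q" using T_nonneg[OF phiT(1)[OF that]] unfolding q_def by auto
    show "\<exists>d>0. \<forall>x'. dist x' y < d \<longrightarrow> dist (G s x') (G s y) < e"
    proof (intro exI[of _ "e / q"] conjI allI impI)
      show "e / q > 0" using e q by simp
      fix y' assume y': "dist y' y < e / q"
      have "\<bar>G s y' - G s y\<bar> \<le> tnorm (\<phi>s s) * dist y' y" using G_lip[OF that] .
      also have "\<dots> \<le> q * dist y' y" using q by (intro mult_right_mono) auto
      also have "\<dots> < q * (e / q)" using y' q by (intro mult_strict_left_mono) auto
      also have "\<dots> = e" using q by simp
      finally show "dist (G s y') (G s y) < e" by (simp add: dist_real_def)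
    qed
  qed
  have G_bound: "\<bar>G s y\<bar> \<le> (pp s + (dist y xs)\<^sup>2) / 2" if "s \<in> space M" for s y
  proof -
    have "\<bar>G s y\<bar> \<le> \<bar>tnorm (\<phi>s s)\<bar> * \<bar>tnorm (tlog xs y)\<bar>" unfolding G_def by (rule tinner_bound)
    also have "\<dots> = tnorm (\<phi>s s) * dist y xs"
      using T_nonneg[OF phiT(1)[OF that]] by (simp add: tnorm_tlog dist_commute)
    also have "\<dots> \<le> (pp s + (dist y xs)\<^sup>2) / 2"
    proof -
      have "0 \<le> (tnorm (\<phi>s s) - dist y xs)\<^sup>2" by simp
      then show ?thesis unfolding pp_def by (simp add: power2_eq_square algebra_simps)
    qed
    finally show ?thesis .
  qed
  have res_meas: "(\<lambda>s. resolvent (A s) (lam n) y) \<in> borel_measurable M" for n y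
    using meas lam_pos by auto
  have res_c: "isCont (resolvent (A s) (lam n)) y" if "s \<in> space M" for n s y
    using res_cont[OF hadamard] mono surj lam_pos that by auto
  define d where "d n \<omega> = (dist (x n \<omega>) xs)\<^sup>2" for n \<omega>
  define \<gamma> where "\<gamma> n \<omega> = G (\<xi> (Suc n) \<omega>) (x n \<omega>)" for n \<omega>
  have step_pt: "d (Suc n) \<omega> + (2 * lam n) * (d n \<omega> * \<alpha> (\<xi> (Suc n) \<omega>)) \<le>
      (1 + 8 * (lam n)\<^sup>2) * d n \<omega> - (2 * lam n) * \<gamma> n \<omega> + (2 * (lam n)\<^sup>2) * pp (\<xi> (Suc n) \<omega>)"
    and step_pt0: "d (Suc n) \<omega> \<le> d n \<omega> - (2 * lam n) * \<gamma> n \<omega> + (2 * (lam n)\<^sup>2) * pp (\<xi> (Suc n) \<omega>)"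
    if "\<omega> \<in> space P" for n \<omega>
  proof -
    define s where "s = \<xi> (Suc n) \<omega>"
    have s: "s \<in> space M" unfolding s_def using xiM[OF that] .
    have xs1: "x (Suc n) \<omega> = resolvent (A s) (lam n) (x n \<omega>)" using iterS that unfolding s_def by auto
    note st = step[OF hadamard sm_s[OF s] _ mono[rule_format, OF s] surj[rule_format, OF s] lam_pos[rule_format, of n]
        phiT[OF s], where x = "x n \<omega>"]
    have a1: "\<alpha> s \<le> 1" using \<alpha>_range s by auto
    show "d (Suc n) \<omega> + (2 * lam n) * (d n \<omega> * \<alpha> (\<xi> (Suc n) \<omega>)) \<le>
      (1 + 8 * (lam n)\<^sup>2) * d n \<omega> - (2 * lam n) * \<gamma> n \<omega> + (2 * (lam n)\<^sup>2) * pp (\<xi> (Suc n) \<omega>)"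
      using st(1)[OF a1] unfolding d_def \<gamma>_def G_def pp_def s_def[symmetric] xs1 by (simp add: algebra_simps)
    show "d (Suc n) \<omega> \<le> d n \<omega> - (2 * lam n) * \<gamma> n \<omega> + (2 * (lam n)\<^sup>2) * pp (\<xi> (Suc n) \<omega>)"
      using st(2)[OF a1] unfolding d_def \<gamma>_def G_def pp_def s_def[symmetric] xs1 by (simp add: algebra_simps)
  qed
  have ppxi_int: "integrable P (\<lambda>\<omega>. pp (\<xi> (Suc n) \<omega>))" for n
    using integrable_distr_eq[OF xi_meas[rule_format, of "Suc n"] pp_meas] pp_int distr[rule_format, of n] by simp
  have ppxi_E: "(\<integral>\<omega>. pp (\<xi> (Suc n) \<omega>) \<partial>P) = c0" for n
    using integral_distr[OF xi_meas[rule_format, of "Suc n"] pp_meas] distr[rule_format, of n] unfolding c0_def by simp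
  have alxi_int: "integrable P (\<lambda>\<omega>. \<alpha> (\<xi> (Suc n) \<omega>))" for n
    using integrable_distr_eq[OF xi_meas[rule_format, of "Suc n"] \<alpha>_meas] al_int distr[rule_format, of n] by simp
  have alxi_E: "(\<integral>\<omega>. \<alpha> (\<xi> (Suc n) \<omega>) \<partial>P) = ab" for n
    using integral_distr[OF xi_meas[rule_format, of "Suc n"] \<alpha>_meas] distr[rule_format, of n] unfolding ab_def by simp
  have gam_int: "integrable P (\<gamma> n)" if xm: "x n \<in> borel_measurable P" and di: "integrable P (d n)" for n
  proof (rule Bochner_Integration.integrable_bound)
    show "integrable P (\<lambda>\<omega>. (pp (\<xi> (Suc n) \<omega>) + d n \<omega>) / 2)"
      using ppxi_int di by auto
    show "\<gamma> n \<in> borel_measurable P" unfolding \<gamma>_def[abs_def]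
      by (rule carath[OF Dd G_meas G_cont xi_meas[rule_format] xm])
    show "AE \<omega> in P. norm (\<gamma> n \<omega>) \<le> norm ((pp (\<xi> (Suc n) \<omega>) + d n \<omega>) / 2)"
    proof (rule AE_I2)
      fix \<omega> assume \<omega>: "\<omega> \<in> space P"
      have "\<bar>\<gamma> n \<omega>\<bar> \<le> (pp (\<xi> (Suc n) \<omega>) + d n \<omega>) / 2"
        unfolding \<gamma>_def d_def using G_bound[OF xiM[OF \<omega>]] .
      then show "norm (\<gamma> n \<omega>) \<le> norm ((pp (\<xi> (Suc n) \<omega>) + d n \<omega>) / 2)"
        using pp_nn[of "\<xi> (Suc n) \<omega>"] by (simp add: d_def)
    qed
  qed
  have meas_int: "x n \<in> borel_measurable (filt P M \<xi> n) \<and> integrable P (d n)" for n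
  proof (induction n)
    case 0
    have "x 0 \<in> borel_measurable (filt P M \<xi> 0)"
      by (rule measurable_cong[THEN iffD2, of _ _ "\<lambda>_. x0"]) (auto simp: filt_space iter0)
    moreover have "integrable P (d 0)"
    proof -
      have c: "integrable P (\<lambda>_. (dist x0 xs)\<^sup>2)" by simp
      have "integrable P (d 0) = integrable P (\<lambda>_. (dist x0 xs)\<^sup>2)"
        by (rule Bochner_Integration.integrable_cong) (auto simp: d_def iter0)
      then show ?thesis using c by simp
    qed
    ultimately show ?case by simp
  next
    case (Suc n)
    have xn: "x n \<in> borel_measurable (filt P M \<xi> (Suc n))" using filt_meas_mono[of n "Suc n"] Suc by auto
    have xnP: "x n \<in> borel_measurable P" using measurable_from_subalg[OF filt_sub[OF xi_meas]] Suc by blast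
    have xi1: "\<xi> (Suc n) \<in> filt P M \<xi> (Suc n) \<rightarrow>\<^sub>M M" using filt_xi[OF xi_meas] by auto
    have m1: "(\<lambda>\<omega>. resolvent (A (\<xi> (Suc n) \<omega>)) (lam n) (x n \<omega>)) \<in> borel_measurable (filt P M \<xi> (Suc n))"
      by (rule carath[OF Dd res_meas res_c xi1 xn])
    have m2: "x (Suc n) \<in> borel_measurable (filt P M \<xi> (Suc n))"
      by (rule measurable_cong[THEN iffD2, OF _ m1]) (use iterS in \<open>auto simp: filt_space\<close>)
    have m2P: "x (Suc n) \<in> borel_measurable P" using measurable_from_subalg[OF filt_sub[OF xi_meas] m2] .
    have di: "integrable P (d (Suc n))"
    proof (rule Bochner_Integration.integrable_bound)
      show "integrable P (\<lambda>\<omega>. d n \<omega> - (2 * lam n) * \<gamma> n \<omega> + (2 * (lam n)\<^sup>2) * pp (\<xi> (Suc n) \<omega>))"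
        using Suc gam_int[OF xnP] ppxi_int by auto
      show "d (Suc n) \<in> borel_measurable P" unfolding d_def[abs_def] using dist2_meas[OF m2P] by simp
      show "AE \<omega> in P. norm (d (Suc n) \<omega>) \<le> norm (d n \<omega> - (2 * lam n) * \<gamma> n \<omega> + (2 * (lam n)\<^sup>2) * pp (\<xi> (Suc n) \<omega>))"
      proof (rule AE_I2)
        fix \<omega> assume \<omega>: "\<omega> \<in> space P"
        have h: "d (Suc n) \<omega> \<le> d n \<omega> - (2 * lam n) * \<gamma> n \<omega> + (2 * (lam n)\<^sup>2) * pp (\<xi> (Suc n) \<omega>)"
          using step_pt0[OF \<omega>] .
        have "0 \<le> d (Suc n) \<omega>" unfolding d_def by simp
        then show "norm (d (Suc n) \<omega>) \<le> norm (d n \<omega> - (2 * lam n) * \<gamma> n \<omega> + (2 * (lam n)\<^sup>2) * pp (\<xi> (Suc n) \<omega>))"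
          using h by simp
      qed
    qed
    show ?case using m2 di by simp
  qed
  have xP: "x n \<in> borel_measurable P" for n
    using measurable_from_subalg[OF filt_sub[OF xi_meas]] meas_int by blast
  have d_int: "integrable P (d n)" for n using meas_int by blast
  have d_nn: "d n \<omega> \<ge> 0" for n \<omega> unfolding d_def by simp
  define a where "a n = (\<integral>\<omega>. d n \<omega> \<partial>P)" for n
  have a_nn: "a n \<ge> 0" for n unfolding a_def using d_nn by simp
  have gam_E: "(\<integral>\<omega>. \<gamma> n \<omega> \<partial>P) = 0" for n
  proof -
    have sfs: "sigma_finite_subalgebra P (filt P M \<xi> n)"
      by (rule finite_measure_subalgebra_is_sigma_finite)
        (simp add: finite_measure_subalgebra_def finite_measure_subalgebra_axioms_def
          P.finite_measure_axioms filt_sub[OF xi_meas])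
    have eqg: "\<gamma> n = (\<lambda>\<omega>. tinner (\<phi>s (\<xi> (Suc n) \<omega>)) (tlog xs (x n \<omega>)))"
      unfolding \<gamma>_def G_def by simp
    have "(\<integral>\<omega>. \<gamma> n \<omega> \<partial>P) = (\<integral>\<omega>. real_cond_exp P (filt P M \<xi> n) (\<gamma> n) \<omega> \<partial>P)"
      using sigma_finite_subalgebra.real_cond_exp_int(2)[OF sfs gam_int[OF xP d_int]] by simp
    also have "\<dots> = 0" using integral_eq_zero_AE[OF A3[rule_format, of n]] unfolding eqg .
    finally show ?thesis .
  qed
  have prodE: "(\<integral>\<omega>. d n \<omega> * \<alpha> (\<xi> (Suc n) \<omega>) \<partial>P) = a n * ab" for n
  proof -
    have dm: "d n \<in> borel_measurable (filt P M \<xi> n)" unfolding d_def[abs_def]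
      using dist2_meas meas_int by blast
    have iv: "P.indep_var borel (d n) borel (\<lambda>\<omega>. \<alpha> (\<xi> (Suc n) \<omega>))"
      by (rule indep_filt[OF probP xi_meas indep dm \<alpha>_meas])
    show ?thesis using P.indep_var_lebesgue_integral[OF iv d_int alxi_int] alxi_E unfolding a_def by simp
  qed
  have prod_int: "integrable P (\<lambda>\<omega>. d n \<omega> * \<alpha> (\<xi> (Suc n) \<omega>))" for n
  proof -
    have dm: "d n \<in> borel_measurable (filt P M \<xi> n)" unfolding d_def[abs_def]
      using dist2_meas meas_int by blast
    have iv: "P.indep_var borel (d n) borel (\<lambda>\<omega>. \<alpha> (\<xi> (Suc n) \<omega>))"
      by (rule indep_filt[OF probP xi_meas indep dm \<alpha>_meas])
    show ?thesis using P.indep_var_integrable[OF iv d_int alxi_int] .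
  qed
  have R1: "a (Suc n) + 2 * lam n * ab * a n \<le> (1 + 8 * (lam n)\<^sup>2) * a n + 2 * (lam n)\<^sup>2 * c0" for n
  proof -
    have "(\<integral>\<omega>. d (Suc n) \<omega> + (2 * lam n) * (d n \<omega> * \<alpha> (\<xi> (Suc n) \<omega>)) \<partial>P) \<le>
        (\<integral>\<omega>. (1 + 8 * (lam n)\<^sup>2) * d n \<omega> - (2 * lam n) * \<gamma> n \<omega> + (2 * (lam n)\<^sup>2) * pp (\<xi> (Suc n) \<omega>) \<partial>P)"
      using step_pt d_int prod_int gam_int[OF xP d_int] ppxi_int by (intro integral_mono) auto
    also have "(\<integral>\<omega>. (1 + 8 * (lam n)\<^sup>2) * d n \<omega> - (2 * lam n) * \<gamma> n \<omega> + (2 * (lam n)\<^sup>2) * pp (\<xi> (Suc n) \<omega>) \<partial>P)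
        = (1 + 8 * (lam n)\<^sup>2) * a n - (2 * lam n) * 0 + (2 * (lam n)\<^sup>2) * c0"
      using d_int gam_int[OF xP d_int] ppxi_int gam_E ppxi_E unfolding a_def by simp
    also have "(\<integral>\<omega>. d (Suc n) \<omega> + (2 * lam n) * (d n \<omega> * \<alpha> (\<xi> (Suc n) \<omega>)) \<partial>P)
        = a (Suc n) + (2 * lam n) * (a n * ab)"
      using d_int prod_int prodE unfolding a_def by simp
    finally show ?thesis by (simp add: algebra_simps)
  qed
  have R0: "a (Suc n) \<le> a n + 2 * (lam n)\<^sup>2 * c0" for n
  proof -
    have "(\<integral>\<omega>. d (Suc n) \<omega> \<partial>P) \<le> (\<integral>\<omega>. d n \<omega> - (2 * lam n) * \<gamma> n \<omega> + (2 * (lam n)\<^sup>2) * pp (\<xi> (Suc n) \<omega>) \<partial>P)"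
      using step_pt0 d_int gam_int[OF xP d_int] ppxi_int by (intro integral_mono) auto
    also have "\<dots> = a n - (2 * lam n) * 0 + (2 * (lam n)\<^sup>2) * c0"
      using d_int gam_int[OF xP d_int] ppxi_int gam_E ppxi_E unfolding a_def by simp
    finally show ?thesis unfolding a_def by simp
  qed
  define S where "S = (\<Sum>n. (lam n)\<^sup>2)"
  have S: "0 \<le> S" "S < \<Lambda>" unfolding S_def using \<Lambda> sq_sum by (auto intro: suminf_nonneg)
  have Spart: "(\<Sum>i<n. (lam i)\<^sup>2) \<le> S" for n unfolding S_def using sq_sum by (intro sum_le_suminf) auto
  have a0: "a 0 = (dist x0 xs)\<^sup>2"
  proof -
    have "a 0 = (\<integral>\<omega>. (dist x0 xs)\<^sup>2 \<partial>P)" unfolding a_def d_def by (rule Bochner_Integration.integral_cong) (auto simp: iter0)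
    then show ?thesis by (simp add: P.prob_space)
  qed
  define B where "B = a 0 + 2 * c0 * S"
  have aB: "a n \<le> B" for n
    using bound_a[of a lam c0, OF R0, of n] Spart[of n] c0 unfolding B_def by (smt (verit) mult_left_mono)
  have L0: "\<Lambda> > 0" using S by linarith
  have Lc: "0 \<le> \<Lambda> * c" using L0 c by simp
  have pos: "0 < b + (4 * (b + 2 * \<Lambda> * c) + \<Lambda> * c)"
  proof -
    have e: "b + (4 * (b + 2 * \<Lambda> * c) + \<Lambda> * c) = 5 * b + 9 * (\<Lambda> * c)" by (simp add: algebra_simps)
    have "0 < 5 * b + 9 * (\<Lambda> * c)" using b(2) Lc by simp
    then show ?thesis unfolding e .
  qed
  have Dpos: "D > 0" unfolding D_def using \<alpha>_int pos by (intro divide_pos_pos mult_pos_pos) auto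
  have sumbound: "(\<Sum>n=N..Mx. lam n * a n) < D" for N Mx
  proof -
    have "(\<Sum>n=N..Mx. lam n * a n) \<le> (\<Sum>n<Suc Mx. lam n * a n)"
      using lam_pos a_nn by (intro sum_mono2) (auto intro: mult_nonneg_nonneg less_imp_le)
    also have "2 * ab * (\<Sum>n<Suc Mx. lam n * a n) \<le> a 0 + (8 * B + 2 * c0) * S"
    proof -
      have "2 * ab * (\<Sum>n<Suc Mx. lam n * a n) + a (Suc Mx) \<le> a 0 + (8 * B + 2 * c0) * (\<Sum>n<Suc Mx. (lam n)\<^sup>2)"
        using rec_sum[of a lam ab c0 B, OF R1 aB] .
      moreover have "(8 * B + 2 * c0) * (\<Sum>n<Suc Mx. (lam n)\<^sup>2) \<le> (8 * B + 2 * c0) * S"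
        by (rule mult_left_mono[OF Spart]) (use c0 aB[of 0] a_nn[of 0] in auto)
      ultimately show ?thesis using a_nn[of "Suc Mx"] by linarith
    qed
    then have "(\<Sum>n<Suc Mx. lam n * a n) \<le> (a 0 + (8 * B + 2 * c0) * S) / (2 * ab)"
      using ab by (simp add: field_simps)
    also have "\<dots> < D"
    proof -
      have "a 0 + (8 * B + 2 * c0) * S < exp (2 * \<Lambda>) * (b + (4 * (b + 2 * \<Lambda> * c) + \<Lambda> * c))"
        unfolding B_def using const_ineq[of "a 0" b c0 c S \<Lambda>] a_nn[of 0] b(1) a0 c0 S by simp
      then show ?thesis unfolding D_def ab_def[symmetric] using ab by (intro divide_strict_right_mono) auto
    qed
    finally show ?thesis .
  qed
  have nn: "(\<integral>\<^sup>+ \<omega>. ennreal ((dist (x n \<omega>) xs)\<^sup>2) \<partial>P) = ennreal (a n)" for n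
    using nn_integral_eq_integral[OF d_int] d_nn unfolding a_def d_def by simp
  have part2: "\<forall>\<epsilon>>0. \<forall>N. \<exists>n\<in>{N..\<theta> N (D / \<epsilon>)}.
             (\<integral>\<^sup>+ \<omega>. ennreal ((dist (x n \<omega>) xs)\<^sup>2) \<partial>P) < ennreal \<epsilon>"
  proof (intro allI impI)
    fix \<epsilon> :: real and N assume ep: "\<epsilon> > 0"
    obtain n where n: "n \<in> {N..\<theta> N (D / \<epsilon>)}" "a n < \<epsilon>"
      using final_real[OF lam_pos \<theta> sumbound Dpos ep] by blast
    then show "\<exists>n\<in>{N..\<theta> N (D / \<epsilon>)}. (\<integral>\<^sup>+ \<omega>. ennreal ((dist (x n \<omega>) xs)\<^sup>2) \<partial>P) < ennreal \<epsilon>"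
      using a_nn[of n] by (intro bexI[of _ n]) (auto simp: nn ennreal_less_iff)
  qed
  have part1: "liminf (\<lambda>n. \<integral>\<^sup>+ \<omega>. ennreal ((dist (x n \<omega>) xs)\<^sup>2) \<partial>P) = 0"
  proof -
    have "liminf (\<lambda>n. ennreal (a n)) \<le> 0"
    proof (rule ennreal_le_epsilon)
      fix e :: real assume e: "0 < e"
      have "(SUP N. INF m\<in>{N..}. ennreal (a m)) \<le> ennreal e"
      proof (rule SUP_least)
        fix N
        obtain n where n: "n \<in> {N..\<theta> N (D / e)}" "a n < e"
          using final_real[OF lam_pos \<theta> sumbound Dpos e] by blast
        have "(INF m\<in>{N..}. ennreal (a m)) \<le> ennreal (a n)" using n by (intro INF_lower) auto
        also have "\<dots> \<le> ennreal e" using n by (intro ennreal_leI) simp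
        finally show "(INF m\<in>{N..}. ennreal (a m)) \<le> ennreal e" .
      qed
      then show "liminf (\<lambda>n. ennreal (a n)) \<le> 0 + ennreal e" unfolding liminf_SUP_INF by simp
    qed
    then show ?thesis unfolding nn by simp
  qed
  show ?thesis using part1 part2 by simp
qed

end
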